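(* For every $n\ge1$ and every $t\ge 2n$, there exist informationally complete $t$-doped POVMs on $n$ data qubits.
   Context: A $t$-doped POVM on $n$ data qubits is defined as follows: take $m\ge0$ ancilla qubits in a stabilizer state $\ket\psi\in(\mathbb{C}^2)^{\otimes m}$, a unitary $U$ on $n+m$ qubits implemented by a circuit of Clifford gates (generated by Hadamard, phase $S$ and CNOT gates) together with $t$ gates $T=\mathrm{diag}(1,e^{i\pi/4})$, and a stabilizer basis $\{\ket{\Phi'_b}\}_{b=1}^{2^{n+m}}$ (the common eigenbasis of $n+m$ independent commuting Pauli operators). Its elements are $\mu_b=(I\otimes\bra\psi)U^\dagger\ket{\Phi'_b}\!\bra{\Phi'_b}U(I\otimes\ket\psi)$, operators on $(\mathbb{C}^2)^{\otimes n}$. A stabilizer state is the unique state stabilized by an abelian subgroup of order $2^m$ of the $m$-qubit Pauli group not containing $-I$. The POVM is informationally complete if $\dim\operatorname{span}\{\mu_b\}=4^n$. *)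

theory Defs
  imports "Jordan_Normal_Form.VS_Connect"
begin

text \<open>Kronecker (tensor) product; the first factor is the most significant one.\<close>
definition kron :: "complex mat \<Rightarrow> complex mat \<Rightarrow> complex mat" where
  "kron A B = mat (dim_row A * dim_row B) (dim_col A * dim_col B)
     (\<lambda>(i,j). A $$ (i div dim_row B, j div dim_col B) * B $$ (i mod dim_row B, j mod dim_col B))"

definition adj :: "complex mat \<Rightarrow> complex mat" where
  "adj A = mat (dim_col A) (dim_row A) (\<lambda>(i,j). cnj (A $$ (j,i)))"

definition ket :: "complex vec \<Rightarrow> complex mat" where
  "ket v = mat (dim_vec v) 1 (\<lambda>(i,j). v $ i)"

definition cinner :: "complex vec \<Rightarrow> complex vec \<Rightarrow> complex" where
  "cinner v w = (\<Sum>i<dim_vec v. cnj (v $ i) * w $ i)"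

definition is_state :: "nat \<Rightarrow> complex vec \<Rightarrow> bool" where
  "is_state N v \<longleftrightarrow> v \<in> carrier_vec (2^N) \<and> cinner v v = 1"

definition pauli_X :: "complex mat" where "pauli_X = mat_of_rows_list 2 [[0,1],[1,0]]"
definition pauli_Y :: "complex mat" where "pauli_Y = mat_of_rows_list 2 [[0,-\<i>],[\<i>,0]]"
definition pauli_Z :: "complex mat" where "pauli_Z = mat_of_rows_list 2 [[1,0],[0,-1]]"
definition hadamard :: "complex mat" where
  "hadamard = (1 / complex_of_real (sqrt 2)) \<cdot>\<^sub>m mat_of_rows_list 2 [[1,1],[1,-1]]"
definition phase_S :: "complex mat" where "phase_S = mat_of_rows_list 2 [[1,0],[0,\<i>]]"
definition gate_T :: "complex mat" where "gate_T = mat_of_rows_list 2 [[1,0],[0,cis (pi/4)]]"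
definition proj0 :: "complex mat" where "proj0 = mat_of_rows_list 2 [[1,0],[0,0]]"
definition proj1 :: "complex mat" where "proj1 = mat_of_rows_list 2 [[0,0],[0,1]]"

definition embed :: "nat \<Rightarrow> nat \<Rightarrow> complex mat \<Rightarrow> complex mat" where
  "embed N k G = kron (1\<^sub>m (2^k)) (kron G (1\<^sub>m (2^(N - k - 1))))"

datatype gate = Hg nat | Sg nat | CNOTg nat nat | Tg nat

fun gate_ok :: "nat \<Rightarrow> gate \<Rightarrow> bool" where
  "gate_ok N (Hg k) = (k < N)"
| "gate_ok N (Sg k) = (k < N)"
| "gate_ok N (Tg k) = (k < N)"
| "gate_ok N (CNOTg c d) = (c < N \<and> d < N \<and> c \<noteq> d)"

fun gate_mat :: "nat \<Rightarrow> gate \<Rightarrow> complex mat" where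
  "gate_mat N (Hg k) = embed N k hadamard"
| "gate_mat N (Sg k) = embed N k phase_S"
| "gate_mat N (Tg k) = embed N k gate_T"
| "gate_mat N (CNOTg c d) = embed N c proj0 + embed N c proj1 * embed N d pauli_X"

fun is_T :: "gate \<Rightarrow> bool" where
  "is_T (Tg k) = True"
| "is_T _ = False"

definition circuit_mat :: "nat \<Rightarrow> gate list \<Rightarrow> complex mat" where
  "circuit_mat N gs = foldl (\<lambda>U g. gate_mat N g * U) (1\<^sub>m (2^N)) gs"

definition t_count :: "gate list \<Rightarrow> nat" where
  "t_count gs = length (filter is_T gs)"

definition pauli_group :: "nat \<Rightarrow> complex mat set" where
  "pauli_group N = {(\<i> ^ k) \<cdot>\<^sub>m foldr kron Ps (1\<^sub>m 1) | k Ps.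
      length Ps = N \<and> set Ps \<subseteq> {1\<^sub>m 2, pauli_X, pauli_Y, pauli_Z}}"

definition stabilizer_group :: "nat \<Rightarrow> complex mat set \<Rightarrow> bool" where
  "stabilizer_group N G \<longleftrightarrow>
     G \<subseteq> pauli_group N \<and> 1\<^sub>m (2^N) \<in> G \<and>
     (\<forall>a\<in>G. \<forall>b\<in>G. a * b \<in> G) \<and> (\<forall>a\<in>G. \<exists>b\<in>G. a * b = 1\<^sub>m (2^N)) \<and>
     (\<forall>a\<in>G. \<forall>b\<in>G. a * b = b * a) \<and>
     (-1) \<cdot>\<^sub>m 1\<^sub>m (2^N) \<notin> G \<and> card G = 2^N"

definition stabilizer_state :: "nat \<Rightarrow> complex vec \<Rightarrow> bool" where
  "stabilizer_state N \<psi> \<longleftrightarrow> is_state N \<psi> \<and>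
     (\<exists>G. stabilizer_group N G \<and>
        (\<forall>v\<in>carrier_vec (2^N). (\<forall>g\<in>G. g *\<^sub>v v = v) \<longleftrightarrow> (\<exists>c. v = c \<cdot>\<^sub>v \<psi>)))"

definition stabilizer_basis :: "nat \<Rightarrow> (nat \<Rightarrow> complex vec) \<Rightarrow> bool" where
  "stabilizer_basis N \<Phi> \<longleftrightarrow>
     (\<exists>G. stabilizer_group N G \<and>
        (\<forall>b<2^N. is_state N (\<Phi> b) \<and> (\<forall>g\<in>G. \<exists>c. g *\<^sub>v \<Phi> b = c \<cdot>\<^sub>v \<Phi> b))) \<and>
     (\<forall>b<2^N. \<forall>b'<2^N. b \<noteq> b' \<longrightarrow> cinner (\<Phi> b) (\<Phi> b') = 0)"

text \<open>mu_b = (I \<otimes> <psi|) U^dagger |Phi_b><Phi_b| U (I \<otimes> |psi>) on n data qubits, m ancillas.\<close>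
definition povm_elem :: "nat \<Rightarrow> nat \<Rightarrow> complex vec \<Rightarrow> gate list \<Rightarrow> (nat \<Rightarrow> complex vec) \<Rightarrow> nat \<Rightarrow> complex mat" where
  "povm_elem n m \<psi> gs \<Phi> b =
     (let V = adj (circuit_mat (n+m) gs) * ket (\<Phi> b);
          W = adj (kron (1\<^sub>m (2^n)) (ket \<psi>)) * V
      in W * adj W)"

definition t_doped_povm :: "nat \<Rightarrow> nat \<Rightarrow> (nat \<Rightarrow> complex mat) \<Rightarrow> nat \<Rightarrow> bool" where
  "t_doped_povm n t \<mu> K \<longleftrightarrow>
     (\<exists>m \<psi> gs \<Phi>. K = 2^(n+m) \<and> stabilizer_state m \<psi> \<and>
        (\<forall>g\<in>set gs. gate_ok (n+m) g) \<and> t_count gs = t \<and>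
        stabilizer_basis (n+m) \<Phi> \<and>
        (\<forall>b<K. \<mu> b = povm_elem n m \<psi> gs \<Phi> b))"

definition mat_span_dim :: "nat \<Rightarrow> complex mat set \<Rightarrow> nat" where
  "mat_span_dim d M = vectorspace.dim (class_ring :: complex ring)
     (module.span_vs (class_ring :: complex ring) (module_mat TYPE(complex) d d) M)"

definition informationally_complete :: "nat \<Rightarrow> (nat \<Rightarrow> complex mat) \<Rightarrow> nat \<Rightarrow> bool" where
  "informationally_complete n \<mu> K \<longleftrightarrow> mat_span_dim (2^n) (\<mu> ` {..<K}) = 4^n"

end

theory Submission
  imports Defs
begin


definition bt :: "nat \<Rightarrow> nat \<Rightarrow> nat" where "bt x s = x div 2^s mod 2"
definition upd :: "nat \<Rightarrow> nat \<Rightarrow> nat \<Rightarrow> nat" where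
  "upd x s b = x div (2 * 2^s) * (2 * 2^s) + b * 2^s + x mod 2^s"

lemma bt_lt2[simp]: "bt x s < 2" by (simp add: bt_def)

lemma mod2p_div: "(x::nat) mod (2 * 2^s) div 2^s = bt x s"
proof -
  have "x mod (2^s * 2) = 2^s * (x div 2^s mod 2) + x mod 2^s" by (rule mod_mult2_eq)
  then show ?thesis by (simp add: bt_def mult.commute)
qed

lemma upd_parts:
  assumes "b < 2"
  shows "upd x s b div (2 * 2^s) = x div (2 * 2^s)"
    and "upd x s b mod (2 * 2^s) = b * 2^s + x mod 2^s"
    and "upd x s b mod 2^s = x mod 2^s"
    and "bt (upd x s b) s = b"
proof -
  let ?p = "2^s :: nat"
  have r: "b * ?p + x mod ?p < 2 * ?p"
  proof -
    have "x mod ?p < ?p" by simp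
    moreover have "b * ?p \<le> ?p" using assms by (cases b) auto
    ultimately show ?thesis by linarith
  qed
  have e: "upd x s b = (b * ?p + x mod ?p) + (x div (2 * ?p)) * (2 * ?p)" unfolding upd_def by simp
  show 1: "upd x s b div (2 * ?p) = x div (2 * ?p)" unfolding e using r
    by (simp add: div_mult_self2)
  show 2: "upd x s b mod (2 * ?p) = b * 2^s + x mod 2^s" unfolding e using r by simp
  have "upd x s b mod ?p = (upd x s b mod (2 * ?p)) mod ?p"
    by (simp add: mod_mod_cancel)
  also have "\<dots> = x mod ?p" unfolding 2 by simp
  finally show "upd x s b mod 2^s = x mod 2^s" .
  have "bt (upd x s b) s = upd x s b mod (2 * ?p) div ?p" by (simp add: mod2p_div)
  also have "\<dots> = b" unfolding 2 using assms by simp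
  finally show "bt (upd x s b) s = b" .
qed

lemma decomp: "(z::nat) = z div (2 * 2^s) * (2 * 2^s) + bt z s * 2^s + z mod 2^s"
proof -
  have "z mod (2^s * 2) = 2^s * (z div 2^s mod 2) + z mod 2^s" by (rule mod_mult2_eq)
  then have "z mod (2 * 2^s) = bt z s * 2^s + z mod 2^s" by (simp add: bt_def mult.commute)
  moreover have "z = z div (2 * 2^s) * (2 * 2^s) + z mod (2 * 2^s)" by (metis div_mult_mod_eq)
  ultimately show ?thesis by simp
qed

lemma upd_self: "upd x s (bt x s) = x"
  unfolding upd_def using decomp[of x s] by simp

lemma bt_low: assumes "q < s" shows "bt (x mod 2^s) q = bt x q"
proof -
  have d: "2 * 2^q dvd (2^s::nat)" using assms
    by (metis Suc_leI le_imp_power_dvd power_Suc)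
  have "bt (x mod 2^s) q = (x mod 2^s) mod (2 * 2^q) div 2^q" by (simp add: mod2p_div)
  also have "\<dots> = x mod (2 * 2^q) div 2^q" using d by (simp add: mod_mod_cancel)
  also have "\<dots> = bt x q" by (simp add: mod2p_div)
  finally show ?thesis .
qed

lemma bt_high: assumes "s < q" shows "bt x q = bt (x div (2 * 2^s)) (q - Suc s)"
proof -
  have "(2::nat)^q = 2 * 2^s * 2^(q - Suc s)" using assms
    by (metis Suc_leI le_add_diff_inverse power_Suc power_add)
  then show ?thesis unfolding bt_def by (simp add: div_mult2_eq)
qed

lemma bt_upd: assumes "b < 2" shows "bt (upd x s b) q = (if q = s then b else bt x q)"
proof (cases "q = s")
  case True then show ?thesis using upd_parts(4)[OF assms] by simp
next
  case False
  show ?thesis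
  proof (cases "q < s")
    case True
    then show ?thesis using bt_low[OF True, of "upd x s b"] bt_low[OF True, of x] upd_parts(3)[OF assms]
      by simp
  next
    case F: False
    with False have "s < q" by simp
    then show ?thesis using bt_high[OF \<open>s < q\<close>, of "upd x s b"] bt_high[OF \<open>s < q\<close>, of x] upd_parts(1)[OF assms]
      by simp
  qed
qed

lemma upd_lt: assumes "x < 2^N" "s < N" "b < 2" shows "upd x s b < 2^N"
proof -
  have N: "(2::nat)^N = (2 * 2^s) * 2^(N - Suc s)" using assms(2)
    by (metis Suc_leI le_add_diff_inverse power_Suc power_add)
  have "x div (2 * 2^s) < 2^(N - Suc s)" using assms(1) unfolding N
    by (metis less_mult_imp_div_less mult.commute)
  hence "x div (2 * 2^s) + 1 \<le> 2^(N - Suc s)" by simp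
  hence "(x div (2 * 2^s) + 1) * (2 * 2^s) \<le> 2^N" unfolding N by (metis mult.commute mult_le_mono2)
  moreover have "b * 2^s + x mod 2^s < 2 * 2^s"
  proof -
    have "x mod 2^s < (2::nat)^s" by simp
    moreover have "b * 2^s \<le> (2::nat)^s" using assms by (cases b) auto
    ultimately show ?thesis by linarith
  qed
  ultimately show ?thesis unfolding upd_def by (simp add: algebra_simps)
qed


lemma kron_dims[simp]: "dim_row (kron A B) = dim_row A * dim_row B" "dim_col (kron A B) = dim_col A * dim_col B"
  by (simp_all add: kron_def)

lemma kron_index: "i < dim_row A * dim_row B \<Longrightarrow> j < dim_col A * dim_col B \<Longrightarrow>
  kron A B $$ (i,j) = A $$ (i div dim_row B, j div dim_col B) * B $$ (i mod dim_row B, j mod dim_col B)"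
  by (simp add: kron_def)

lemma pow_split: "k < N \<Longrightarrow> (2::nat)^k * (2 * 2^(N - k - 1)) = 2^N"
  by (metis Suc_diff_Suc diff_Suc_1 diff_diff_left le_add_diff_inverse less_imp_le_nat power_Suc power_add plus_1_eq_Suc)

lemma embed_carrier: "G \<in> carrier_mat 2 2 \<Longrightarrow> k < N \<Longrightarrow> embed N k G \<in> carrier_mat (2^N) (2^N)"
  unfolding embed_def using pow_split[of k N] by auto

lemma embed_index:
  assumes G: "G \<in> carrier_mat 2 2" and k: "k < N" and x: "x < 2^N" and z: "z < 2^N"
  shows "embed N k G $$ (x,z) = (if x div (2 * 2^(N-k-1)) = z div (2 * 2^(N-k-1)) then 1 else 0) *
     (G $$ (bt x (N-k-1), bt z (N-k-1)) * (if x mod 2^(N-k-1) = z mod 2^(N-k-1) then 1 else 0))"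
proof -
  let ?p = "2^(N-k-1) :: nat"
  have P: "2^k * (2 * ?p) = 2^N" using pow_split[OF k] .
  have pos: "0 < 2 * ?p" by simp
  have xd: "x div (2 * ?p) < 2^k" using x P
    by (metis less_mult_imp_div_less)
  have zd: "z div (2 * ?p) < 2^k" using z P
    by (metis less_mult_imp_div_less)
  have xm: "x mod (2 * ?p) < 2 * ?p" "z mod (2 * ?p) < 2 * ?p" by simp_all
  have mm: "x mod (2 * ?p) mod ?p = x mod ?p" "z mod (2 * ?p) mod ?p = z mod ?p"
    by (simp_all add: mod_mod_cancel)
  have G2: "dim_row G = 2" "dim_col G = 2" using G by auto
  have e1: "embed N k G $$ (x,z) = 1\<^sub>m (2^k) $$ (x div (2 * ?p), z div (2 * ?p)) *
       kron G (1\<^sub>m ?p) $$ (x mod (2 * ?p), z mod (2 * ?p))"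
    unfolding embed_def using x z P G2 by (simp add: kron_index)
  have e2: "kron G (1\<^sub>m ?p) $$ (x mod (2 * ?p), z mod (2 * ?p)) =
      G $$ (bt x (N-k-1), bt z (N-k-1)) * (if x mod ?p = z mod ?p then 1 else 0)"
    using xm G2 mm by (simp add: kron_index mod2p_div del: mod_mult_self2_is_0)
  show ?thesis unfolding e1 e2 using xd zd by simp
qed

lemma embed_mult_index:
  assumes G: "G \<in> carrier_mat 2 2" and k: "k < N" and x: "x < 2^N" and M: "M \<in> carrier_mat (2^N) nc"
    and y: "y < nc"
  shows "(embed N k G * M) $$ (x,y) = (\<Sum>b<2. G $$ (bt x (N-k-1), b) * M $$ (upd x (N-k-1) b, y))"
proof -
  let ?s = "N-k-1"
  let ?p = "2^?s :: nat"
  have sN: "?s < N" using k by simp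
  define F where "F z = embed N k G $$ (x,z) * M $$ (z,y)" for z
  have "(embed N k G * M) $$ (x,y) = (\<Sum>z\<in>{0..<2^N}. F z)"
    using embed_carrier[OF G k] M x y by (simp add: scalar_prod_def F_def)
  also have "\<dots> = (\<Sum>z\<in>upd x ?s ` {..<2}. F z)"
  proof (rule sum.mono_neutral_right)
    show "finite {0..<2^N::nat}" by simp
    show "upd x ?s ` {..<2} \<subseteq> {0..<2^N}" using upd_lt[OF x sN] by auto
    show "\<forall>z\<in>{0..<2^N} - upd x ?s ` {..<2}. F z = 0"
    proof
      fix z assume zz: "z \<in> {0..<2^N} - upd x ?s ` {..<2}"
      hence z: "z < 2^N" by auto
      have "\<not> (x div (2 * ?p) = z div (2 * ?p) \<and> x mod ?p = z mod ?p)"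
      proof
        assume h: "x div (2 * ?p) = z div (2 * ?p) \<and> x mod ?p = z mod ?p"
        have "z = upd x ?s (bt z ?s)" unfolding upd_def using h decomp[of z ?s] by simp
        moreover have "bt z ?s \<in> {..<2}" by simp
        ultimately show False using zz by blast
      qed
      then show "F z = 0" unfolding F_def using embed_index[OF G k x z] by auto
    qed
  qed
  also have "\<dots> = (\<Sum>b<2. F (upd x ?s b))"
  proof (rule sum.reindex[unfolded comp_def])
    show "inj_on (upd x ?s) {..<2}"
      by (rule inj_onI) (metis lessThan_iff upd_parts(4))
  qed
  also have "\<dots> = (\<Sum>b<2. G $$ (bt x ?s, b) * M $$ (upd x ?s b, y))"
  proof (rule sum.cong[OF refl])
    fix b assume b: "b \<in> {..<2::nat}"
    hence b2: "b < 2" by simp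
    show "F (upd x ?s b) = G $$ (bt x ?s, b) * M $$ (upd x ?s b, y)"
      unfolding F_def using embed_index[OF G k x upd_lt[OF x sN b2]] upd_parts[OF b2, of x ?s]
      by simp
  qed
  finally show ?thesis .
qed


definition pr :: "nat \<Rightarrow> nat \<Rightarrow> nat \<Rightarrow> nat" where "pr n j x = 2 * bt x (n+j) + bt x j"

definition PP :: "nat \<Rightarrow> (nat \<Rightarrow> complex mat) \<Rightarrow> complex mat" where
  "PP n A = mat (2^(n+n)) (2^(n+n)) (\<lambda>(x,y). \<Prod>j<n. A j $$ (pr n j x, pr n j y))"

definition mq :: "nat \<Rightarrow> nat \<Rightarrow> nat \<Rightarrow> nat" where
  "mq n j q = (if q = 0 then n - 1 - j else n + n - 1 - j)"

lemma pr_lt[simp]: "pr n j x < 4"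
  unfolding pr_def using bt_lt2[of x "n+j"] bt_lt2[of x j] by linarith

lemma PP_carrier[simp]: "PP n A \<in> carrier_mat (2^(n+n)) (2^(n+n))"
  by (simp add: PP_def)

lemma PP_dims[simp]: "dim_row (PP n A) = 2^(n+n)" "dim_col (PP n A) = 2^(n+n)"
  by (simp_all add: PP_def)

lemma PP_index: "x < 2^(n+n) \<Longrightarrow> y < 2^(n+n) \<Longrightarrow> PP n A $$ (x,y) = (\<Prod>j<n. A j $$ (pr n j x, pr n j y))"
  by (simp add: PP_def)

lemma small_bits:
  assumes "u < 2" "v < 2" "b < 2"
  shows "bt (2*u+v) 1 = u" "bt (2*u+v) 0 = v" "upd (2*u+v) 1 b = 2*b+v" "upd (2*u+v) 0 b = 2*u+b"
proof -
  have "u \<in> {0,1}" "v \<in> {0,1}" "b \<in> {0,1}" using assms by auto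
  then show "bt (2*u+v) 1 = u" "bt (2*u+v) 0 = v" "upd (2*u+v) 1 b = 2*b+v" "upd (2*u+v) 0 b = 2*u+b"
    by (auto simp: bt_def upd_def)
qed

lemma mq_pos:
  assumes "j < n" "q < 2"
  shows "mq n j q < n + n" "n + n - mq n j q - 1 = (if q = 0 then n + j else j)"
  using assms by (auto simp: mq_def)

lemma pr_upd_other:
  assumes "i \<noteq> j" "s = n + j \<or> s = j" "b < 2" "i < n" "j < n"
  shows "pr n i (upd x s b) = pr n i x"
  using assms unfolding pr_def by (auto simp: bt_upd)

lemma PP_embed:
  assumes j: "j < n" and q: "q < 2" and G: "G \<in> carrier_mat 2 2" and A: "\<And>i. A i \<in> carrier_mat 4 4"
  shows "embed (n+n) (mq n j q) G * PP n A = PP n (A(j := embed 2 q G * A j))"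
proof -
  let ?N = "n+n"
  let ?k = "mq n j q"
  let ?s = "?N - ?k - 1"
  have k: "?k < ?N" using mq_pos[OF j q] by simp
  have s: "?s = (if q = 0 then n + j else j)" using mq_pos[OF j q] by simp
  have sN: "?s = n + j \<or> ?s = j" using s by auto
  have E: "embed ?N ?k G \<in> carrier_mat (2^?N) (2^?N)" using embed_carrier[OF G k] .
  have q1: "1 - q < 2" "(2::nat) - q - 1 = 1 - q" by auto
  show ?thesis
  proof (rule eq_matI)
    show "dim_row (embed ?N ?k G * PP n A) = dim_row (PP n (A(j := embed 2 q G * A j)))"
      using E by simp
    show "dim_col (embed ?N ?k G * PP n A) = dim_col (PP n (A(j := embed 2 q G * A j)))"
      using E by simp
    fix x y assume "x < dim_row (PP n (A(j := embed 2 q G * A j)))" "y < dim_col (PP n (A(j := embed 2 q G * A j)))"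
    hence x: "x < 2^?N" and y: "y < 2^?N" by auto
    define R where "R = (\<Prod>i\<in>{..<n} - {j}. A i $$ (pr n i x, pr n i y))"
    have prod_split: "(\<Prod>i<n. B i $$ (pr n i x', pr n i y)) = B j $$ (pr n j x', pr n j y) * (\<Prod>i\<in>{..<n} - {j}. B i $$ (pr n i x', pr n i y))"
      for B :: "nat \<Rightarrow> complex mat" and x'
      using j by (subst prod.remove[of "{..<n}" j]) auto
    have "(embed ?N ?k G * PP n A) $$ (x,y) = (\<Sum>b<2. G $$ (bt x ?s, b) * PP n A $$ (upd x ?s b, y))"
      by (rule embed_mult_index[OF G k x PP_carrier y])
    also have "\<dots> = (\<Sum>b<2. G $$ (bt x ?s, b) * (A j $$ (pr n j (upd x ?s b), pr n j y) * R))"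
    proof (rule sum.cong[OF refl])
      fix b assume "b \<in> {..<2::nat}" hence b: "b < 2" by simp
      have u: "upd x ?s b < 2^?N" using upd_lt[OF x _ b] k by auto
      have "PP n A $$ (upd x ?s b, y) = A j $$ (pr n j (upd x ?s b), pr n j y) * R"
        unfolding PP_index[OF u y] prod_split R_def
        using pr_upd_other[OF _ sN b _ j] by (auto intro!: prod.cong)
      then show "G $$ (bt x ?s, b) * PP n A $$ (upd x ?s b, y) = G $$ (bt x ?s, b) * (A j $$ (pr n j (upd x ?s b), pr n j y) * R)"
        by simp
    qed
    also have "\<dots> = (\<Sum>b<2. G $$ (bt x ?s, b) * A j $$ (pr n j (upd x ?s b), pr n j y)) * R"
      by (simp add: sum_distrib_right mult.assoc)
    also have "(\<Sum>b<2. G $$ (bt x ?s, b) * A j $$ (pr n j (upd x ?s b), pr n j y)) = (embed 2 q G * A j) $$ (pr n j x, pr n j y)"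
    proof -
      have "(embed 2 q G * A j) $$ (pr n j x, pr n j y) =
         (\<Sum>b<2. G $$ (bt (pr n j x) (1 - q), b) * A j $$ (upd (pr n j x) (1 - q) b, pr n j y))"
        using embed_mult_index[OF G _ _ _ , of q 2 "pr n j x" "A j" 4 "pr n j y"] q A[of j] q1 by simp
      also have "\<dots> = (\<Sum>b<2. G $$ (bt x ?s, b) * A j $$ (pr n j (upd x ?s b), pr n j y))"
      proof (rule sum.cong[OF refl])
        fix b assume "b \<in> {..<2::nat}" hence b: "b < 2" by simp
        have "bt (pr n j x) (1 - q) = bt x ?s \<and> upd (pr n j x) (1 - q) b = pr n j (upd x ?s b)"
        proof (cases "q = 0")
          case True
          then show ?thesis unfolding pr_def using s small_bits[OF bt_lt2 bt_lt2 b] b j by (simp add: bt_upd)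
        next
          case False
          then have "q = 1" using q by simp
          then show ?thesis unfolding pr_def using s small_bits[OF bt_lt2 bt_lt2 b] b j by (simp add: bt_upd)
        qed
        then show "G $$ (bt (pr n j x) (1 - q), b) * A j $$ (upd (pr n j x) (1 - q) b, pr n j y) =
          G $$ (bt x ?s, b) * A j $$ (pr n j (upd x ?s b), pr n j y)" by simp
      qed
      finally show ?thesis by simp
    qed
    also have "(embed 2 q G * A j) $$ (pr n j x, pr n j y) * R = PP n (A(j := embed 2 q G * A j)) $$ (x,y)"
      unfolding PP_index[OF x y] prod_split R_def by (auto intro!: prod.cong)
    finally show "(embed ?N ?k G * PP n A) $$ (x,y) = PP n (A(j := embed 2 q G * A j)) $$ (x,y)" .
  qed
qed


lemma gates_carrier[simp]:
  "hadamard \<in> carrier_mat 2 2" "phase_S \<in> carrier_mat 2 2" "gate_T \<in> carrier_mat 2 2"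
  "proj0 \<in> carrier_mat 2 2" "proj1 \<in> carrier_mat 2 2" "pauli_X \<in> carrier_mat 2 2"
  "pauli_Y \<in> carrier_mat 2 2" "pauli_Z \<in> carrier_mat 2 2"
  by (auto simp: hadamard_def phase_S_def gate_T_def proj0_def proj1_def pauli_X_def pauli_Y_def
      pauli_Z_def mat_of_rows_list_def)

lemma PP_add:
  assumes j: "j < n" and B: "B \<in> carrier_mat 4 4" and C: "C \<in> carrier_mat 4 4"
  shows "PP n (A(j := B)) + PP n (A(j := C)) = PP n (A(j := B + C))"
proof (rule eq_matI)
  fix x y assume "x < dim_row (PP n (A(j := B + C)))" "y < dim_col (PP n (A(j := B + C)))"
  hence x: "x < 2^(n+n)" and y: "y < 2^(n+n)" by auto
  have prod_split: "(\<Prod>i<n. D i $$ (pr n i x, pr n i y)) = D j $$ (pr n j x, pr n j y) * (\<Prod>i\<in>{..<n} - {j}. D i $$ (pr n i x, pr n i y))"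
    for D :: "nat \<Rightarrow> complex mat"
    using j by (subst prod.remove[of "{..<n}" j]) auto
  have R: "(\<Prod>i\<in>{..<n} - {j}. (A(j:=D)) i $$ (pr n i x, pr n i y)) = (\<Prod>i\<in>{..<n} - {j}. A i $$ (pr n i x, pr n i y))"
    for D by (rule prod.cong) auto
  have "(PP n (A(j := B)) + PP n (A(j := C))) $$ (x, y) = PP n (A(j := B)) $$ (x, y) + PP n (A(j := C)) $$ (x, y)"
    using x y by simp
  also have "\<dots> = PP n (A(j := B + C)) $$ (x, y)"
    using B C unfolding PP_index[OF x y] prod_split R by (simp add: distrib_right)
  finally show "(PP n (A(j := B)) + PP n (A(j := C))) $$ (x, y) = PP n (A(j := B + C)) $$ (x, y)" .
qed auto

fun mapg :: "nat \<Rightarrow> nat \<Rightarrow> gate \<Rightarrow> gate" where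
  "mapg n j (Hg q) = Hg (mq n j q)"
| "mapg n j (Sg q) = Sg (mq n j q)"
| "mapg n j (Tg q) = Tg (mq n j q)"
| "mapg n j (CNOTg c d) = CNOTg (mq n j c) (mq n j d)"

lemma embed2_carrier: "G \<in> carrier_mat 2 2 \<Longrightarrow> q < 2 \<Longrightarrow> embed 2 q G \<in> carrier_mat 4 4"
  using embed_carrier[of G q 2] by simp

lemma PP_embed':
  assumes "j < n" "q < 2" "G \<in> carrier_mat 2 2" "\<forall>i. A i \<in> carrier_mat 4 4"
  shows "embed (n+n) (mq n j q) G * PP n A = PP n (A(j := embed 2 q G * A j))"
  using PP_embed[OF assms(1-3)] assms(4) by blast

lemma gate_step:
  assumes j: "j < n" and g: "gate_ok 2 g" and A: "\<forall>i. A i \<in> carrier_mat 4 4"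
  shows "gate_mat (n+n) (mapg n j g) * PP n A = PP n (A(j := gate_mat 2 g * A j))"
proof (cases g)
  case (CNOTg c d)
  have c: "c < 2" and d: "d < 2" using g CNOTg by auto
  have kc: "mq n j c < n + n" "mq n j d < n + n" using mq_pos[OF j c] mq_pos[OF j d] by auto
  let ?N = "n+n"
  have E0: "embed ?N (mq n j c) proj0 \<in> carrier_mat (2^?N) (2^?N)" using embed_carrier kc by simp
  have E1: "embed ?N (mq n j c) proj1 \<in> carrier_mat (2^?N) (2^?N)" using embed_carrier kc by simp
  have E2: "embed ?N (mq n j d) pauli_X \<in> carrier_mat (2^?N) (2^?N)" using embed_carrier kc by simp
  have e0: "embed 2 c proj0 \<in> carrier_mat 4 4" "embed 2 c proj1 \<in> carrier_mat 4 4" "embed 2 d pauli_X \<in> carrier_mat 4 4"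
    using embed2_carrier c d by auto
  have A1: "\<forall>i. (A(j := embed 2 d pauli_X * A j)) i \<in> carrier_mat 4 4" using A e0 by auto
  have "gate_mat ?N (mapg n j g) * PP n A =
     embed ?N (mq n j c) proj0 * PP n A + embed ?N (mq n j c) proj1 * (embed ?N (mq n j d) pauli_X * PP n A)"
  proof -
    have E12: "embed ?N (mq n j c) proj1 * embed ?N (mq n j d) pauli_X \<in> carrier_mat (2^?N) (2^?N)"
      using E1 E2 by simp
    show ?thesis using CNOTg add_mult_distrib_mat[OF E0 E12 PP_carrier] assoc_mult_mat[OF E1 E2 PP_carrier] by simp
  qed
  also have "\<dots> = PP n (A(j := embed 2 c proj0 * A j)) + PP n (A(j := embed 2 c proj1 * (embed 2 d pauli_X * A j)))"
  proof -
    have 1: "embed ?N (mq n j c) proj0 * PP n A = PP n (A(j := embed 2 c proj0 * A j))"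
      using PP_embed'[OF j c _ A, of proj0] by simp
    have 2: "embed ?N (mq n j d) pauli_X * PP n A = PP n (A(j := embed 2 d pauli_X * A j))"
      using PP_embed'[OF j d _ A, of pauli_X] by simp
    have 3: "embed ?N (mq n j c) proj1 * PP n (A(j := embed 2 d pauli_X * A j)) =
       PP n ((A(j := embed 2 d pauli_X * A j))(j := embed 2 c proj1 * ((A(j := embed 2 d pauli_X * A j)) j)))"
      using PP_embed'[of j n c proj1 "A(j := embed 2 d pauli_X * A j)"] j c A1 by simp
    show ?thesis unfolding 1 2 3 by (simp only: fun_upd_upd fun_upd_same)
  qed
  also have "\<dots> = PP n (A(j := embed 2 c proj0 * A j + embed 2 c proj1 * (embed 2 d pauli_X * A j)))"
    using PP_add[OF j] e0 A by (simp add: mult_carrier_mat)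
  also have "embed 2 c proj0 * A j + embed 2 c proj1 * (embed 2 d pauli_X * A j) = gate_mat 2 g * A j"
  proof -
    have Aj: "A j \<in> carrier_mat 4 4" using A by simp
    have m: "embed 2 c proj1 * embed 2 d pauli_X \<in> carrier_mat 4 4" using e0 by simp
    show ?thesis using CNOTg add_mult_distrib_mat[OF e0(1) m Aj] assoc_mult_mat[OF e0(2) e0(3) Aj] by simp
  qed
  finally show ?thesis .
qed (use assms PP_embed'[OF j _ _ A] in auto)

lemma circ_step:
  assumes j: "j < n" and g: "\<forall>g\<in>set gs. gate_ok 2 g" and A: "\<forall>i. A i \<in> carrier_mat 4 4"
  shows "foldl (\<lambda>U g. gate_mat (n+n) g * U) (PP n A) (map (mapg n j) gs) =
         PP n (A(j := foldl (\<lambda>U g. gate_mat 2 g * U) (A j) gs))"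
  using g A
proof (induction gs arbitrary: A)
  case Nil then show ?case by simp
next
  case (Cons g gs)
  have gm: "gate_mat 2 g \<in> carrier_mat 4 4"
    using Cons.prems(1) by (cases g) (auto intro!: embed2_carrier add_carrier_mat mult_carrier_mat)
  have A': "\<forall>i. (A(j := gate_mat 2 g * A j)) i \<in> carrier_mat 4 4" using Cons.prems(2) gm by auto
  have st: "gate_mat (n+n) (mapg n j g) * PP n A = PP n (A(j := gate_mat 2 g * A j))"
    using gate_step[OF j _ Cons.prems(2), of g] Cons.prems(1) by simp
  have "foldl (\<lambda>U g. gate_mat (n+n) g * U) (PP n A) (map (mapg n j) (g # gs)) =
     foldl (\<lambda>U g. gate_mat (n+n) g * U) (PP n (A(j := gate_mat 2 g * A j))) (map (mapg n j) gs)"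
    using st by simp
  also have "\<dots> = PP n ((A(j := gate_mat 2 g * A j))(j := foldl (\<lambda>U g. gate_mat 2 g * U) ((A(j := gate_mat 2 g * A j)) j) gs))"
    using Cons.prems(1) Cons.IH[of "A(j := gate_mat 2 g * A j)", OF _ A'] by (simp only: set_simps ball_simps) blast
  also have "\<dots> = PP n (A(j := foldl (\<lambda>U g. gate_mat 2 g * U) (A j) (g # gs)))"
    by (simp only: fun_upd_upd fun_upd_same foldl_Cons)
  finally show ?case .
qed

lemma bits_eq: "x < 2^K \<Longrightarrow> y < 2^K \<Longrightarrow> (\<forall>q<K. bt x q = bt y q) \<Longrightarrow> (x::nat) = y"
proof (induction K arbitrary: x y)
  case 0 then show ?case by simp
next
  case (Suc K)
  have "x div 2 = y div 2"
  proof (rule Suc.IH)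
    show "x div 2 < 2^K" "y div 2 < 2^K" using Suc.prems by auto
    show "\<forall>q<K. bt (x div 2) q = bt (y div 2) q"
    proof (intro allI impI)
      fix q assume "q < K"
      then have "bt x (Suc q) = bt y (Suc q)" using Suc.prems by auto
      then show "bt (x div 2) q = bt (y div 2) q" by (simp add: bt_def div_mult2_eq)
    qed
  qed
  moreover have "x mod 2 = y mod 2" using Suc.prems(3) by (auto simp: bt_def)
  ultimately show ?case by (metis div_mult_mod_eq)
qed

lemma pr_eq: "pr n j x = pr n j y \<longleftrightarrow> bt x (n+j) = bt y (n+j) \<and> bt x j = bt y j"
  unfolding pr_def using bt_lt2[of x "n+j"] bt_lt2[of x j] bt_lt2[of y "n+j"] bt_lt2[of y j] by presburger

lemma all_pr_eq:
  assumes x: "x < 2^(n+n)" and y: "y < 2^(n+n)"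
  shows "(\<forall>j<n. pr n j x = pr n j y) \<longleftrightarrow> x = y"
proof
  assume h: "\<forall>j<n. pr n j x = pr n j y"
  show "x = y"
  proof (rule bits_eq[OF x y], intro allI impI)
    fix q assume q: "q < n + n"
    show "bt x q = bt y q"
    proof (cases "q < n")
      case True then show ?thesis using h pr_eq by blast
    next
      case False
      then have "q = n + (q - n)" "q - n < n" using q by auto
      then show ?thesis using h pr_eq by metis
    qed
  qed
qed simp

lemma prod_indicator: "(\<Prod>j<(n::nat). if P j then (1::complex) else 0) = (if \<forall>j<n. P j then 1 else 0)"
  by (induction n) (auto simp: less_Suc_eq)

lemma PP_one: "PP n (\<lambda>_. 1\<^sub>m 4) = 1\<^sub>m (2^(n+n))"
proof (rule eq_matI)
  fix x y assume "x < dim_row (1\<^sub>m (2^(n+n)) :: complex mat)" "y < dim_col (1\<^sub>m (2^(n+n)) :: complex mat)"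
  hence x: "x < 2^(n+n)" and y: "y < 2^(n+n)" by auto
  have "PP n (\<lambda>_. 1\<^sub>m 4) $$ (x,y) = (\<Prod>j<n. (1\<^sub>m 4 :: complex mat) $$ (pr n j x, pr n j y))"
    by (rule PP_index[OF x y])
  also have "\<dots> = (\<Prod>j<n. if pr n j x = pr n j y then 1 else 0)"
    by (rule prod.cong) auto
  also have "\<dots> = (if x = y then 1 else 0)"
    unfolding prod_indicator all_pr_eq[OF x y] ..
  finally show "PP n (\<lambda>_. 1\<^sub>m 4) $$ (x,y) = 1\<^sub>m (2^(n+n)) $$ (x,y)" using x y by simp
qed auto


lemma gate_mat2_carrier: "gate_ok 2 g \<Longrightarrow> gate_mat 2 g \<in> carrier_mat 4 4"
  by (cases g) (auto intro!: embed2_carrier add_carrier_mat mult_carrier_mat)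

lemma foldl2_carrier: "\<forall>g\<in>set gs. gate_ok 2 g \<Longrightarrow> M \<in> carrier_mat 4 4 \<Longrightarrow>
  foldl (\<lambda>U g. gate_mat 2 g * U) M gs \<in> carrier_mat 4 4"
proof (induction gs arbitrary: M)
  case (Cons g gs)
  have "gate_mat 2 g * M \<in> carrier_mat 4 4" using Cons.prems gate_mat2_carrier[of g] by auto
  then show ?case using Cons by simp
qed simp

definition fullc :: "nat \<Rightarrow> (nat \<Rightarrow> gate list) \<Rightarrow> nat \<Rightarrow> gate list" where
  "fullc n gad k = concat (map (\<lambda>j. map (mapg n j) (gad j)) [0..<k])"

lemma circ_all:
  assumes k: "k \<le> n" and g: "\<forall>j. \<forall>g\<in>set (gad j). gate_ok 2 g" and A: "\<forall>i. A i \<in> carrier_mat 4 4"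
  shows "foldl (\<lambda>U g. gate_mat (n+n) g * U) (PP n A) (fullc n gad k) =
     PP n (\<lambda>i. if i < k then foldl (\<lambda>U g. gate_mat 2 g * U) (A i) (gad i) else A i)"
  using k
proof (induction k)
  case 0 then show ?case by (simp add: fullc_def)
next
  case (Suc k)
  let ?A = "\<lambda>i. if i < k then foldl (\<lambda>U g. gate_mat 2 g * U) (A i) (gad i) else A i"
  have A': "\<forall>i. ?A i \<in> carrier_mat 4 4" using A g foldl2_carrier by auto
  have "foldl (\<lambda>U g. gate_mat (n+n) g * U) (PP n A) (fullc n gad (Suc k)) =
     foldl (\<lambda>U g. gate_mat (n+n) g * U) (PP n ?A) (map (mapg n k) (gad k))"
    using Suc by (simp add: fullc_def)
  also have "\<dots> = PP n (?A(k := foldl (\<lambda>U g. gate_mat 2 g * U) (?A k) (gad k)))"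
    using circ_step[of k n "gad k" ?A] Suc.prems g A' by simp
  also have "?A(k := foldl (\<lambda>U g. gate_mat 2 g * U) (?A k) (gad k)) =
    (\<lambda>i. if i < Suc k then foldl (\<lambda>U g. gate_mat 2 g * U) (A i) (gad i) else A i)"
    by (auto simp: fun_eq_iff less_Suc_eq)
  finally show ?case .
qed

lemma circuit_PP:
  assumes g: "\<forall>j. \<forall>g\<in>set (gad j). gate_ok 2 g"
  shows "circuit_mat (n+n) (fullc n gad n) = PP n (\<lambda>i. if i < n then circuit_mat 2 (gad i) else 1\<^sub>m 4)"
proof -
  have f: "(2::nat)^2 = 4" by simp
  show ?thesis
    using circ_all[of n n gad "\<lambda>_. 1\<^sub>m 4"] g unfolding circuit_mat_def PP_one[symmetric] f by simp
qed



definition app1 :: "complex mat \<Rightarrow> nat \<Rightarrow> (nat \<Rightarrow> complex) \<Rightarrow> nat \<Rightarrow> complex" where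
  "app1 G s f c = (\<Sum>b<2. G $$ (bt c s, b) * f (upd c s b))"

fun app :: "gate \<Rightarrow> (nat \<Rightarrow> complex) \<Rightarrow> nat \<Rightarrow> complex" where
  "app (Hg q) f = app1 hadamard (1 - q) f"
| "app (Sg q) f = app1 phase_S (1 - q) f"
| "app (Tg q) f = app1 gate_T (1 - q) f"
| "app (CNOTg c d) f = (\<lambda>x. app1 proj0 (1 - c) f x + app1 proj1 (1 - c) (app1 pauli_X (1 - d) f) x)"

lemma app1_cong: "(\<And>c. c < 4 \<Longrightarrow> f c = f' c) \<Longrightarrow> s < 2 \<Longrightarrow> c < 4 \<Longrightarrow> app1 G s f c = app1 G s f' c"
  unfolding app1_def using upd_lt[of c 2 s] by (auto intro!: sum.cong)

lemma embed2_col: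
  assumes "G \<in> carrier_mat 2 2" "q < 2" "M \<in> carrier_mat 4 4" "c < 4" "w < 4"
  shows "(embed 2 q G * M) $$ (c, w) = app1 G (1 - q) (\<lambda>c. M $$ (c, w)) c"
proof -
  have M': "M \<in> carrier_mat (2^2) 4" using assms by simp
  have c': "c < 2^2" using assms by simp
  have e: "2 - q - 1 = 1 - q" by simp
  show ?thesis using embed_mult_index[OF assms(1) assms(2) c' M' assms(5)] unfolding app1_def e .
qed

lemma app_col:
  assumes g: "gate_ok 2 g" and M: "M \<in> carrier_mat 4 4" and c: "c < 4" and w: "w < 4"
  shows "(gate_mat 2 g * M) $$ (c, w) = app g (\<lambda>c. M $$ (c, w)) c"
proof (cases g)
  case (CNOTg a d)
  have a: "a < 2" "d < 2" using g CNOTg by auto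
  have e: "embed 2 a proj0 \<in> carrier_mat 4 4" "embed 2 a proj1 \<in> carrier_mat 4 4" "embed 2 d pauli_X \<in> carrier_mat 4 4"
    using embed2_carrier a by auto
  have m: "embed 2 a proj1 * embed 2 d pauli_X \<in> carrier_mat 4 4" using e by simp
  have XM: "embed 2 d pauli_X * M \<in> carrier_mat 4 4" using e M by simp
  have "(gate_mat 2 g * M) $$ (c, w) = (embed 2 a proj0 * M) $$ (c,w) + (embed 2 a proj1 * (embed 2 d pauli_X * M)) $$ (c,w)"
    using CNOTg add_mult_distrib_mat[OF e(1) m M] assoc_mult_mat[OF e(2) e(3) M] c w e M by simp
  also have "\<dots> = app1 proj0 (1 - a) (\<lambda>c. M $$ (c, w)) c + app1 proj1 (1 - a) (\<lambda>c. (embed 2 d pauli_X * M) $$ (c, w)) c"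
    using embed2_col[OF _ a(1) M c w, of proj0] embed2_col[OF _ a(1) XM c w, of proj1] by simp
  also have "app1 proj1 (1 - a) (\<lambda>c. (embed 2 d pauli_X * M) $$ (c, w)) c = app1 proj1 (1 - a) (app1 pauli_X (1 - d) (\<lambda>c. M $$ (c, w))) c"
    by (rule app1_cong) (use embed2_col[OF _ a(2) M _ w, of pauli_X] c in auto)
  finally show ?thesis using CNOTg by simp
qed (use assms embed2_col in auto)

fun appl :: "gate list \<Rightarrow> (nat \<Rightarrow> complex) \<Rightarrow> nat \<Rightarrow> complex" where
  "appl [] f = f"
| "appl (g # gs) f = appl gs (app g f)"

lemma app_cong:
  assumes f: "\<forall>c<4. f c = f' c" and c: "c < 4"
  shows "app g f c = app g f' c"
proof -
  have f2: "\<And>c. c < 4 \<Longrightarrow> f c = f' c" using f by blast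
  have s: "1 - q < (2::nat)" for q by simp
  show ?thesis
  proof (cases g)
    case (Hg q) then show ?thesis using app1_cong[OF f2 s c] by simp
  next
    case (Sg q) then show ?thesis using app1_cong[OF f2 s c] by simp
  next
    case (Tg q) then show ?thesis using app1_cong[OF f2 s c] by simp
  next
    case (CNOTg a d)
    have X: "\<And>c. c < 4 \<Longrightarrow> app1 pauli_X (1 - d) f c = app1 pauli_X (1 - d) f' c"
      by (rule app1_cong[OF f2]) simp_all
    have sa: "1 - a < (2::nat)" by arith
    have 1: "app1 proj0 (1-a) f c = app1 proj0 (1-a) f' c" by (rule app1_cong[OF f2 sa c])
    have 2: "app1 proj1 (1-a) (app1 pauli_X (1-d) f) c = app1 proj1 (1-a) (app1 pauli_X (1-d) f') c"
      by (rule app1_cong[OF X sa c])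
    show ?thesis using CNOTg 1 2 by simp
  qed
qed

lemma appl_cong: "\<forall>g\<in>set gs. gate_ok 2 g \<Longrightarrow> \<forall>c<4. f c = f' c \<Longrightarrow> c < 4 \<Longrightarrow> appl gs f c = appl gs f' c"
proof (induction gs arbitrary: f f' c)
  case Nil then show ?case by simp
next
  case (Cons g gs)
  have "\<forall>c<4. app g f c = app g f' c" using Cons.prems app_cong[of f f'] by blast
  then show ?case using Cons.IH[of "app g f" "app g f'" c] Cons.prems by simp
qed

lemma foldl_col:
  assumes "\<forall>g\<in>set gs. gate_ok 2 g" "M \<in> carrier_mat 4 4" "c < 4" "w < 4"
  shows "foldl (\<lambda>U g. gate_mat 2 g * U) M gs $$ (c, w) = appl gs (\<lambda>c. M $$ (c, w)) c"
  using assms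
proof (induction gs arbitrary: M c)
  case Nil then show ?case by simp
next
  case (Cons g gs)
  have gM: "gate_mat 2 g * M \<in> carrier_mat 4 4" using Cons.prems gate_mat2_carrier[of g] by (intro mult_carrier_mat) auto
  have "foldl (\<lambda>U g. gate_mat 2 g * U) M (g # gs) $$ (c, w) = appl gs (\<lambda>c. (gate_mat 2 g * M) $$ (c, w)) c"
    using Cons.IH[OF _ gM] Cons.prems by simp
  also have "\<dots> = appl gs (app g (\<lambda>c. M $$ (c, w))) c"
    using Cons.prems app_col[of g M _ w] by (intro appl_cong) auto
  finally show ?case by simp
qed


lemma sum2: "(\<Sum>b<(2::nat). F b) = F 0 + F 1"
  by (simp add: numeral_2_eq_2)

definition hh :: complex where "hh = 1 / complex_of_real (sqrt 2)"
definition om :: complex where "om = cis (pi/4)"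

lemma gate_entries:
  "hadamard $$ (0,0) = hh" "hadamard $$ (0,1) = hh" "hadamard $$ (1,0) = hh" "hadamard $$ (1,1) = - hh"
  "gate_T $$ (0,0) = 1" "gate_T $$ (0,1) = 0" "gate_T $$ (1,0) = 0" "gate_T $$ (1,1) = om"
  "proj0 $$ (0,0) = 1" "proj0 $$ (0,1) = 0" "proj0 $$ (1,0) = 0" "proj0 $$ (1,1) = 0"
  "proj1 $$ (0,0) = 0" "proj1 $$ (0,1) = 0" "proj1 $$ (1,0) = 0" "proj1 $$ (1,1) = 1"
  "pauli_X $$ (0,0) = 0" "pauli_X $$ (0,1) = 1" "pauli_X $$ (1,0) = 1" "pauli_X $$ (1,1) = 0"
  by (simp_all add: hadamard_def gate_T_def proj0_def proj1_def pauli_X_def mat_of_rows_list_def hh_def om_def)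

lemmas gate_entries' = gate_entries[unfolded One_nat_def]

definition gadG :: "gate list" where "gadG = [Hg 1, Tg 1, Hg 1, Tg 1, CNOTg 0 1, Hg 0]"

definition f0 :: "nat \<Rightarrow> nat \<Rightarrow> complex" where "f0 x c = (if c = 2 * x then 1 else 0)"

definition mm :: "nat \<Rightarrow> complex" where
  "mm a = (if a = 0 then hh * (hh + hh * om) else om * (hh * (hh - hh * om)))"

definition Vg :: "nat \<Rightarrow> nat \<Rightarrow> complex" where
  "Vg c x = hh * (-1)^(x * (c div 2)) * mm ((c + x) mod 2)"

lemma ge_0_0: "appl gadG (f0 0) 0 = Vg 0 0"
  unfolding gadG_def
  by (simp add: app1_def sum2 bt_def upd_def gate_entries gate_entries' f0_def Vg_def mm_def) (simp_all add: algebra_simps)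

lemma ge_0_1: "appl gadG (f0 1) 0 = Vg 0 1"
  unfolding gadG_def
  by (simp add: app1_def sum2 bt_def upd_def gate_entries gate_entries' f0_def Vg_def mm_def) (simp_all add: algebra_simps)

lemma ge_1_0: "appl gadG (f0 0) 1 = Vg 1 0"
  unfolding gadG_def
  by (simp add: app1_def sum2 bt_def upd_def gate_entries gate_entries' f0_def Vg_def mm_def) (simp_all add: algebra_simps)

lemma ge_1_1: "appl gadG (f0 1) 1 = Vg 1 1"
  unfolding gadG_def
  by (simp add: app1_def sum2 bt_def upd_def gate_entries gate_entries' f0_def Vg_def mm_def) (simp_all add: algebra_simps)

lemma ge_2_0: "appl gadG (f0 0) 2 = Vg 2 0"
  unfolding gadG_def
  by (simp add: app1_def sum2 bt_def upd_def gate_entries gate_entries' f0_def Vg_def mm_def) (simp_all add: algebra_simps)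

lemma ge_2_1: "appl gadG (f0 1) 2 = Vg 2 1"
  unfolding gadG_def
  by (simp add: app1_def sum2 bt_def upd_def gate_entries gate_entries' f0_def Vg_def mm_def) (simp_all add: algebra_simps)

lemma ge_3_0: "appl gadG (f0 0) 3 = Vg 3 0"
  unfolding gadG_def
  by (simp add: app1_def sum2 bt_def upd_def gate_entries gate_entries' f0_def Vg_def mm_def) (simp_all add: algebra_simps)

lemma ge_3_1: "appl gadG (f0 1) 3 = Vg 3 1"
  unfolding gadG_def
  by (simp add: app1_def sum2 bt_def upd_def gate_entries gate_entries' f0_def Vg_def mm_def) (simp_all add: algebra_simps)

lemma gad_eval: assumes "c < 4" "x < 2" shows "appl gadG (f0 x) c = Vg c x"
proof -
  have "c \<in> {0,1,2,3}" "x \<in> {0,1}" using assms by auto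
  then show ?thesis using ge_0_0 ge_0_1 ge_1_0 ge_1_1 ge_2_0 ge_2_1 ge_3_0 ge_3_1 by auto
qed


definition gad :: "nat \<Rightarrow> nat \<Rightarrow> gate list" where
  "gad r i = (if i = 0 then replicate r (Tg 1) else []) @ gadG"

lemma gad_ok: "\<forall>g\<in>set (gad r i). gate_ok 2 g"
  by (auto simp: gad_def gadG_def)

lemma appl_append: "appl (xs @ ys) f = appl ys (appl xs f)"
  by (induction xs arbitrary: f) auto

lemma T_f0: assumes "c < 4" "x < 2" shows "app (Tg 1) (f0 x) c = f0 x c"
proof -
  have "c \<in> {0,1,2,3}" "x \<in> {0,1}" using assms by auto
  then show ?thesis by (auto simp add: app1_def sum2 bt_def upd_def gate_entries gate_entries' f0_def)
qed

lemma T_pad: assumes x: "x < 2" shows "\<forall>g. (\<forall>c<4. g c = f0 x c) \<longrightarrow> (\<forall>c<4. appl (replicate r (Tg 1)) g c = f0 x c)"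
proof (induction r)
  case 0 then show ?case by simp
next
  case (Suc r)
  show ?case
  proof (intro allI impI)
    fix g c assume g: "\<forall>c<4. g c = f0 x c" and c: "c < (4::nat)"
    have "\<forall>c<4. app (Tg 1) g c = f0 x c"
    proof (intro allI impI)
      fix c :: nat assume c: "c < 4"
      have "app (Tg 1) g c = app (Tg 1) (f0 x) c" using app_cong[OF g c] .
      also have "\<dots> = f0 x c" using T_f0[OF c x] .
      finally show "app (Tg 1) g c = f0 x c" .
    qed
    then show "appl (replicate (Suc r) (Tg 1)) g c = f0 x c" using Suc.IH c by simp
  qed
qed

lemma gad_col: assumes c: "c < 4" and x: "x < 2"
  shows "circuit_mat 2 (gad r i) $$ (c, 2 * x) = Vg c x"
proof -
  have f: "(2::nat)^2 = 4" by simp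
  have w: "2 * x < 4" using x by simp
  have "circuit_mat 2 (gad r i) $$ (c, 2 * x) = appl (gad r i) (\<lambda>c. (1\<^sub>m 4 :: complex mat) $$ (c, 2 * x)) c"
    unfolding circuit_mat_def f by (rule foldl_col[OF gad_ok _ c w]) simp
  also have "\<dots> = appl (gad r i) (f0 x) c"
    by (rule appl_cong[OF gad_ok _ c]) (auto simp: f0_def w)
  also have "\<dots> = appl gadG (appl (if i = 0 then replicate r (Tg 1) else []) (f0 x)) c"
    unfolding gad_def appl_append ..
  also have "\<dots> = appl gadG (f0 x) c"
  proof (rule appl_cong[OF _ _ c])
    show "\<forall>g\<in>set gadG. gate_ok 2 g" by (auto simp: gadG_def)
    show "\<forall>c<4. appl (if i = 0 then replicate r (Tg 1) else []) (f0 x) c = f0 x c"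
      using T_pad[OF x, of r] by auto
  qed
  also have "\<dots> = Vg c x" by (rule gad_eval[OF c x])
  finally show ?thesis .
qed

lemma tcount_gad: "t_count (gad r i) = (if i = 0 then r else 0) + 2"
  by (simp add: t_count_def gad_def gadG_def)


definition nuB :: "complex \<Rightarrow> complex \<Rightarrow> complex \<Rightarrow> complex \<Rightarrow> nat \<Rightarrow> nat \<Rightarrow> nat \<Rightarrow> complex" where
  "nuB P Q Z W c i j = 1/2 * (-1)^((i+j)*(c div 2)) *
     (if i = j then (if (c mod 2 = 0) = (i = 0) then P else Q) else (if (c mod 2 = 0) = (i = 0) then Z else W))"

definition gaN :: "complex \<Rightarrow> complex \<Rightarrow> complex \<Rightarrow> complex \<Rightarrow> nat \<Rightarrow> nat \<Rightarrow> nat \<Rightarrow> complex" where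
  "gaN P Q Z W x y c =
     (if x = 0 \<and> y = 0 then (if c mod 2 = 0 then P else - Q)
     else if x = 1 \<and> y = 1 then (if c mod 2 = 0 then - Q else P)
     else if x = 0 \<and> y = 1 then (-1)^(c div 2) * (if c mod 2 = 0 then Z else - W)
     else (-1)^(c div 2) * (if c mod 2 = 0 then - W else Z))"

definition gaD :: "complex \<Rightarrow> complex \<Rightarrow> complex \<Rightarrow> complex \<Rightarrow> nat \<Rightarrow> nat \<Rightarrow> complex" where
  "gaD P Q Z W x y = (if x = y then P*P - Q*Q else Z*Z - W*W)"

definition gaB where "gaB P Q Z W x y c = gaN P Q Z W x y c / gaD P Q Z W x y"

lemma sum4: "(\<Sum>c<(4::nat). F c) = F 0 + F 1 + F 2 + F 3"
  by (simp add: numeral_eq_Suc)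

lemma icb_0000: "(\<Sum>c<4. gaN P Q Z W 0 0 c * nuB P Q Z W c 0 0) = gaD P Q Z W 0 0"
  by (simp add: sum4 gaN_def nuB_def gaD_def algebra_simps)

lemma icb_0001: "(\<Sum>c<4. gaN P Q Z W 0 0 c * nuB P Q Z W c 0 1) = 0"
  by (simp add: sum4 gaN_def nuB_def gaD_def algebra_simps)

lemma icb_0010: "(\<Sum>c<4. gaN P Q Z W 0 0 c * nuB P Q Z W c 1 0) = 0"
  by (simp add: sum4 gaN_def nuB_def gaD_def algebra_simps)

lemma icb_0011: "(\<Sum>c<4. gaN P Q Z W 0 0 c * nuB P Q Z W c 1 1) = 0"
  by (simp add: sum4 gaN_def nuB_def gaD_def algebra_simps)

lemma icb_0100: "(\<Sum>c<4. gaN P Q Z W 0 1 c * nuB P Q Z W c 0 0) = 0"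
  by (simp add: sum4 gaN_def nuB_def gaD_def algebra_simps)

lemma icb_0101: "(\<Sum>c<4. gaN P Q Z W 0 1 c * nuB P Q Z W c 0 1) = gaD P Q Z W 0 1"
  by (simp add: sum4 gaN_def nuB_def gaD_def algebra_simps)

lemma icb_0110: "(\<Sum>c<4. gaN P Q Z W 0 1 c * nuB P Q Z W c 1 0) = 0"
  by (simp add: sum4 gaN_def nuB_def gaD_def algebra_simps)

lemma icb_0111: "(\<Sum>c<4. gaN P Q Z W 0 1 c * nuB P Q Z W c 1 1) = 0"
  by (simp add: sum4 gaN_def nuB_def gaD_def algebra_simps)

lemma icb_1000: "(\<Sum>c<4. gaN P Q Z W 1 0 c * nuB P Q Z W c 0 0) = 0"
  by (simp add: sum4 gaN_def nuB_def gaD_def algebra_simps)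

lemma icb_1001: "(\<Sum>c<4. gaN P Q Z W 1 0 c * nuB P Q Z W c 0 1) = 0"
  by (simp add: sum4 gaN_def nuB_def gaD_def algebra_simps)

lemma icb_1010: "(\<Sum>c<4. gaN P Q Z W 1 0 c * nuB P Q Z W c 1 0) = gaD P Q Z W 1 0"
  by (simp add: sum4 gaN_def nuB_def gaD_def algebra_simps)

lemma icb_1011: "(\<Sum>c<4. gaN P Q Z W 1 0 c * nuB P Q Z W c 1 1) = 0"
  by (simp add: sum4 gaN_def nuB_def gaD_def algebra_simps)

lemma icb_1100: "(\<Sum>c<4. gaN P Q Z W 1 1 c * nuB P Q Z W c 0 0) = 0"
  by (simp add: sum4 gaN_def nuB_def gaD_def algebra_simps)

lemma icb_1101: "(\<Sum>c<4. gaN P Q Z W 1 1 c * nuB P Q Z W c 0 1) = 0"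
  by (simp add: sum4 gaN_def nuB_def gaD_def algebra_simps)

lemma icb_1110: "(\<Sum>c<4. gaN P Q Z W 1 1 c * nuB P Q Z W c 1 0) = 0"
  by (simp add: sum4 gaN_def nuB_def gaD_def algebra_simps)

lemma icb_1111: "(\<Sum>c<4. gaN P Q Z W 1 1 c * nuB P Q Z W c 1 1) = gaD P Q Z W 1 1"
  by (simp add: sum4 gaN_def nuB_def gaD_def algebra_simps)

lemma ic_abstract:
  assumes d: "P*P - Q*Q \<noteq> 0" "Z*Z - W*W \<noteq> 0" and xy: "x < 2" "y < 2" "i < 2" "j < 2"
  shows "(\<Sum>c<4. gaB P Q Z W x y c * nuB P Q Z W c i j) = (if i = x \<and> j = y then 1 else 0)"
proof -
  have D: "gaD P Q Z W x y \<noteq> 0" using d by (simp add: gaD_def)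
  have "(\<Sum>c<4. gaB P Q Z W x y c * nuB P Q Z W c i j) = (\<Sum>c<4. gaN P Q Z W x y c * nuB P Q Z W c i j) / gaD P Q Z W x y"
    by (simp add: gaB_def sum_divide_distrib)
  moreover have "x \<in> {0,1}" "y \<in> {0,1}" "i \<in> {0,1}" "j \<in> {0,1}" using xy by auto
  ultimately show ?thesis using D icb_0000 icb_0001 icb_0010 icb_0011 icb_0100 icb_0101 icb_0110 icb_0111 icb_1000 icb_1001 icb_1010 icb_1011 icb_1100 icb_1101 icb_1110 icb_1111 by auto
qed


lemma hh_real: "cnj hh = hh" by (simp add: hh_def)
lemma hh_sq: "hh * hh = 1/2"
proof -
  have "sqrt 2 * sqrt 2 = (2::real)" by simp
  then have "complex_of_real (sqrt 2) * complex_of_real (sqrt 2) = 2" by (metis of_real_mult of_real_numeral)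
  then show ?thesis unfolding hh_def by (simp add: field_simps)
qed
lemma om_cnj: "cnj om * om = 1" unfolding om_def by (simp add: cis_cnj cis_mult)
lemma om_sq: "om * om = \<i>" unfolding om_def by (simp add: cis_mult)
lemma om_re: "om + cnj om \<noteq> 0"
proof -
  have "Re (om + cnj om) = 2 * cos (pi/4)" unfolding om_def by simp
  also have "\<dots> > 0" by (simp add: cos_45)
  finally have r: "Re (om + cnj om) > 0" .
  show ?thesis
  proof
    assume "om + cnj om = 0"
    then have "Re (om + cnj om) = 0" by (simp only: zero_complex.sel)
    then show False using r by simp
  qed
qed

lemma m0_val: "mm 0 = (1 + om) / 2"
proof -
  have "mm 0 = hh * hh * (1 + om)" by (simp add: mm_def algebra_simps)
  then show ?thesis by (simp add: hh_sq)
qed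
lemma m1_val: "mm 1 = om * (1 - om) / 2"
proof -
  have "mm 1 = hh * hh * (om * (1 - om))" by (simp add: mm_def algebra_simps)
  then show ?thesis by (simp add: hh_sq)
qed

abbreviation "P0 \<equiv> cnj (mm 0) * mm 0"
abbreviation "Q0 \<equiv> cnj (mm 1) * mm 1"
abbreviation "Z0 \<equiv> cnj (mm 0) * mm 1"
abbreviation "W0 \<equiv> cnj (mm 1) * mm 0"

lemma poly1: assumes "c * w = (1::complex)" shows "(1 + c) * (1 + w) = 2 + w + c"
proof -
  have "(1 + c) * (1 + w) = 1 + w + c + c * w" by (simp add: algebra_simps)
  then show ?thesis using assms by simp
qed
lemma poly2: assumes "c * w = (1::complex)" shows "c * w * ((1 - c) * (1 - w)) = 2 - w - c"
proof -
  have "(1 - c) * (1 - w) = 1 - c - w + c * w" by (simp add: algebra_simps)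
  then show ?thesis using assms by simp
qed
lemma poly3: assumes "c * w = (1::complex)" "w * w = \<i>" shows "(1 + c) * (w * (1 - w)) = 1 - \<i>"
proof -
  have "(1 + c) * (w * (1 - w)) = w - w * w + c * w - (c * w) * w" by (simp add: algebra_simps)
  then show ?thesis using assms by simp
qed
lemma poly4: assumes "c * w = (1::complex)" "c * c = - \<i>" shows "(c * (1 - c)) * (1 + w) = 1 + \<i>"
proof -
  have "(c * (1 - c)) * (1 + w) = c + c * w - c * c - c * (c * w)" by (simp add: algebra_simps)
  then show ?thesis using assms by simp
qed

lemma PQ_nz: "P0 * P0 - Q0 * Q0 \<noteq> 0"
proof -
  let ?c = "cnj om"
  have P: "P0 = (2 + om + ?c) / 4" unfolding m0_val using poly1[OF om_cnj] by simp
  have "Q0 = cnj om * om * ((1 - cnj om) * (1 - om)) / 4" unfolding m1_val by (simp add: algebra_simps)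
  then have Q: "Q0 = (2 - om - ?c) / 4" using poly2[OF om_cnj] by simp
  have "P0 * P0 - Q0 * Q0 = (P0 - Q0) * (P0 + Q0)" by (simp add: algebra_simps)
  also have "\<dots> = (om + ?c) / 2" unfolding P Q by (simp add: field_simps)
  finally have eq: "P0 * P0 - Q0 * Q0 = (om + ?c) / 2" .
  show ?thesis unfolding eq using om_re by simp
qed

lemma ZW_nz: "Z0 * Z0 - W0 * W0 \<noteq> 0"
proof -
  let ?c = "cnj om"
  have om2: "?c * ?c = - \<i>" using om_sq by (metis complex_cnj_i complex_cnj_mult)
  have "Z0 = (1 + ?c) * (om * (1 - om)) / 4" unfolding m0_val m1_val by simp
  then have Z: "Z0 = (1 - \<i>) / 4" using poly3[OF om_cnj om_sq] by simp
  have "W0 = (?c * (1 - ?c)) * (1 + om) / 4" unfolding m0_val m1_val by simp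
  then have W: "W0 = (1 + \<i>) / 4" using poly4[OF om_cnj om2] by simp
  have "Z0 * Z0 - W0 * W0 = - \<i> / 4" unfolding Z W by (simp add: field_simps algebra_simps)
  then show ?thesis by simp
qed

lemma nu_V0: "cnj (Vg c i) * Vg c j = 1/2 * (-1)^((i+j)*(c div 2)) * (cnj (mm ((c+i) mod 2)) * mm ((c+j) mod 2))"
proof -
  have "cnj (Vg c i) * Vg c j = (cnj hh * hh) * ((-1)^(i*(c div 2)) * (-1)^(j*(c div 2))) * (cnj (mm ((c+i) mod 2)) * mm ((c+j) mod 2))"
    unfolding Vg_def by (simp add: algebra_simps)
  also have "(-1::complex)^(i*(c div 2)) * (-1)^(j*(c div 2)) = (-1)^((i+j)*(c div 2))"
    by (simp add: power_add add_mult_distrib)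
  finally show ?thesis by (simp add: hh_real hh_sq)
qed

lemma nu_V: assumes "c < 4" "i < 2" "j < 2"
  shows "cnj (Vg c i) * Vg c j = nuB P0 Q0 Z0 W0 c i j"
proof -
  have "c \<in> {0,1,2,3}" "i \<in> {0,1}" "j \<in> {0,1}" using assms by auto
  then show ?thesis unfolding nu_V0 by (auto simp: nuB_def)
qed


lemma sum_split: "(\<Sum>b<a*m. f b) = (\<Sum>h<a. \<Sum>l<m. f (h*m + l :: nat))"
proof -
  have "(\<Sum>b<a*m. f b) = (\<Sum>h<a. \<Sum>b\<in>{h*m..<h*m+m}. f b)"
    using sum.nat_group[of f m a] by simp
  also have "\<dots> = (\<Sum>h<a. \<Sum>l<m. f (h*m + l))"
  proof (rule sum.cong[OF refl])
    fix h
    have "(\<Sum>b\<in>{0+h*m..<m+h*m}. f b) = (\<Sum>l\<in>{0..<m}. f (l + h*m))"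
      by (rule sum.shift_bounds_nat_ivl)
    then show "(\<Sum>b\<in>{h*m..<h*m+m}. f b) = (\<Sum>l<m. f (h*m + l))"
      by (simp add: add.commute atLeast0LessThan)
  qed
  finally show ?thesis .
qed

lemma bt_split: assumes "l < 2^n" "j < n"
  shows "bt (h * 2^n + l) (n + j) = bt h j" "bt (h * 2^n + l) j = bt l j"
proof -
  have "(h * 2^n + l) div 2^(n+j) = ((h * 2^n + l) div 2^n) div 2^j" by (simp add: power_add div_mult2_eq)
  also have "(h * 2^n + l) div 2^n = h" using assms by simp
  finally show "bt (h * 2^n + l) (n + j) = bt h j" by (simp add: bt_def)
  have "bt (h * 2^n + l) j = bt ((h * 2^n + l) mod 2^n) j" using bt_low[of j n "h * 2^n + l"] assms(2) by simp
  also have "(h * 2^n + l) mod 2^n = l" using assms by simp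
  finally show "bt (h * 2^n + l) j = bt l j" .
qed

lemma bt_double: assumes "u < 2" shows "bt (h * 2 + u) (Suc j) = bt h j" "bt (h * 2 + u) 0 = u"
proof -
  have "(h * 2 + u) div 2 = h" using assms by simp
  moreover have "(h * 2 + u) div 2^Suc j = (h * 2 + u) div 2 div 2^j" by (simp add: div_mult2_eq)
  ultimately show "bt (h * 2 + u) (Suc j) = bt h j" by (simp add: bt_def)
  show "bt (h * 2 + u) 0 = u" using assms by (simp add: bt_def)
qed

lemma split2: "(\<Sum>h<(2::nat)^Suc n. g h) = (\<Sum>h<2^n. \<Sum>u<2. g (h*2+u))"
proof -
  have p: "(2::nat)^Suc n = 2^n * 2" by simp
  show ?thesis unfolding p by (rule sum_split)
qed

lemma sum2x2: fixes G :: "nat \<Rightarrow> nat \<Rightarrow> nat \<Rightarrow> complex"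
  shows "(\<Sum>h<2^n. \<Sum>l<2^n. \<Prod>j<n. G j (bt h j) (bt l j)) = (\<Prod>j<n. \<Sum>u<2. \<Sum>v<2. G j u v)"
proof (induction n arbitrary: G)
  case 0 then show ?case by simp
next
  case (Suc n)
  define R where "R h l = (\<Prod>j<n. G (Suc j) (bt h j) (bt l j))" for h l
  have inner: "(\<Prod>j<Suc n. G j (bt (h*2+u) j) (bt (l*2+v) j)) = G 0 u v * R h l"
    if "u < 2" "v < 2" for h u l v
    unfolding prod.lessThan_Suc_shift using that by (simp add: bt_double R_def)
  have "(\<Sum>h<2^Suc n. \<Sum>l<2^Suc n. \<Prod>j<Suc n. G j (bt h j) (bt l j)) =
    (\<Sum>h<2^n. \<Sum>u<2. \<Sum>l<2^n. \<Sum>v<2. \<Prod>j<Suc n. G j (bt (h*2+u) j) (bt (l*2+v) j))"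
    by (simp only: split2)
  also have "\<dots> = (\<Sum>h<2^n. \<Sum>u<2. \<Sum>l<2^n. \<Sum>v<2. G 0 u v * R h l)"
    by (intro sum.cong refl) (rule inner; simp)
  also have "\<dots> = (\<Sum>h<2^n. \<Sum>l<2^n. \<Sum>u<2. \<Sum>v<2. G 0 u v * R h l)"
    by (rule sum.cong[OF refl]) (rule sum.swap)
  also have "\<dots> = (\<Sum>h<2^n. \<Sum>l<2^n. (\<Sum>u<2. \<Sum>v<2. G 0 u v) * R h l)"
    by (simp only: sum_distrib_right)
  also have "\<dots> = (\<Sum>u<2. \<Sum>v<2. G 0 u v) * (\<Sum>h<2^n. \<Sum>l<2^n. R h l)"
    by (simp only: sum_distrib_left)
  also have "(\<Sum>h<2^n. \<Sum>l<2^n. R h l) = (\<Prod>j<n. \<Sum>u<2. \<Sum>v<2. G (Suc j) u v)"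
    unfolding R_def by (rule Suc.IH)
  also have "(\<Sum>u<2. \<Sum>v<2. G 0 u v) * \<dots> = (\<Prod>j<Suc n. \<Sum>u<2. \<Sum>v<2. G j u v)"
    by (simp only: prod.lessThan_Suc_shift)
  finally show ?case .
qed

lemma sum_factor: fixes F :: "nat \<Rightarrow> nat \<Rightarrow> complex"
  shows "(\<Sum>b<2^(n+n). \<Prod>j<n. F j (pr n j b)) = (\<Prod>j<n. \<Sum>c<4. F j c)"
proof -
  have "(\<Sum>b<2^(n+n). \<Prod>j<n. F j (pr n j b)) = (\<Sum>h<2^n. \<Sum>l<2^n. \<Prod>j<n. F j (pr n j (h * 2^n + l)))"
    using sum_split[of _ "2^n" "2^n"] by (simp add: power_add)
  also have "\<dots> = (\<Sum>h<2^n. \<Sum>l<2^n. \<Prod>j<n. F j (2 * bt h j + bt l j))"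
    by (intro sum.cong prod.cong refl) (simp add: pr_def bt_split)
  also have "\<dots> = (\<Prod>j<n. \<Sum>u<2. \<Sum>v<2. F j (2 * u + v))"
    by (rule sum2x2)
  also have "\<dots> = (\<Prod>j<n. \<Sum>c<4. F j c)"
    by (simp add: sum2 sum4 add.assoc)
  finally show ?thesis .
qed


lemma adj_dims[simp]: "dim_row (adj A) = dim_col A" "dim_col (adj A) = dim_row A"
  by (simp_all add: adj_def)
lemma adj_index[simp]: "i < dim_col A \<Longrightarrow> j < dim_row A \<Longrightarrow> adj A $$ (i,j) = cnj (A $$ (j,i))"
  by (simp add: adj_def)
lemma ket_dims[simp]: "dim_row (ket v) = dim_vec v" "dim_col (ket v) = 1"
  by (simp_all add: ket_def)
lemma ket_index[simp]: "i < dim_vec v \<Longrightarrow> j < 1 \<Longrightarrow> ket v $$ (i,j) = v $ i"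
  by (simp add: ket_def)

lemma mat_mult_entry: "i < dim_row A \<Longrightarrow> j < dim_col B \<Longrightarrow> dim_col A = dim_row B \<Longrightarrow>
  (A * B) $$ (i,j) = (\<Sum>k<dim_col A. A $$ (i,k) * B $$ (k,j))"
  by (simp add: scalar_prod_def atLeast0LessThan)

lemma sum_single: assumes "k0 < (K::nat)" "\<And>k. k < K \<Longrightarrow> k \<noteq> k0 \<Longrightarrow> f k = 0"
  shows "(\<Sum>k<K. f k) = f k0"
proof -
  have "(\<Sum>k<K. f k) = (\<Sum>k\<in>{k0}. f k)"
    by (rule sum.mono_neutral_right) (use assms in auto)
  then show ?thesis by simp
qed

definition psi0 :: "nat \<Rightarrow> complex vec" where "psi0 n = unit_vec (2^n) 0"
definition Phi :: "nat \<Rightarrow> nat \<Rightarrow> complex vec" where "Phi n b = unit_vec (2^(n+n)) b"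

lemma povm_entry:
  assumes U: "circuit_mat (n+n) gs \<in> carrier_mat (2^(n+n)) (2^(n+n))" and b: "b < 2^(n+n)"
    and X: "X < 2^n" and Y: "Y < 2^n"
  shows "povm_elem n n (psi0 n) gs (Phi n) b $$ (X,Y) =
      cnj (circuit_mat (n+n) gs $$ (b, X*2^n)) * circuit_mat (n+n) gs $$ (b, Y*2^n)"
    and "povm_elem n n (psi0 n) gs (Phi n) b \<in> carrier_mat (2^n) (2^n)"
proof -
  let ?U = "circuit_mat (n+n) gs"
  let ?N = "(2::nat)^(n+n)"
  define V where "V = adj ?U * ket (Phi n b)"
  define K where "K = kron (1\<^sub>m (2^n)) (ket (psi0 n))"
  define W where "W = adj K * V"
  have pe: "povm_elem n n (psi0 n) gs (Phi n) b = W * adj W"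
    unfolding povm_elem_def V_def K_def W_def Let_def ..
  have NN: "?N = 2^n * 2^n" by (simp add: power_add)
  have Vd: "dim_row V = ?N" "dim_col V = 1" using U by (auto simp: V_def Phi_def)
  have Kd: "dim_row K = ?N" "dim_col K = 2^n" by (auto simp: K_def psi0_def NN)
  have Wd: "dim_row W = 2^n" "dim_col W = 1" using Kd Vd by (auto simp: W_def)
  have Vi: "V $$ (i,0) = cnj (?U $$ (b,i))" if i: "i < ?N" for i
  proof -
    have "V $$ (i,0) = (\<Sum>k<?N. adj ?U $$ (i,k) * ket (Phi n b) $$ (k,0))"
      unfolding V_def using U i by (subst mat_mult_entry) (auto simp: Phi_def)
    also have "\<dots> = adj ?U $$ (i,b) * ket (Phi n b) $$ (b,0)"
      by (rule sum_single[OF b]) (use U i b in \<open>auto simp: Phi_def\<close>)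
    also have "\<dots> = cnj (?U $$ (b,i))" using U i b by (simp add: Phi_def)
    finally show ?thesis .
  qed
  have Ki: "K $$ (i, Z) = (if i = Z * 2^n then 1 else 0)" if i: "i < ?N" and Z: "Z < 2^n" for i Z
  proof -
    have "K $$ (i, Z) = 1\<^sub>m (2^n) $$ (i div 2^n, Z) * ket (psi0 n) $$ (i mod 2^n, 0)"
      unfolding K_def using i Z by (subst kron_index) (auto simp: psi0_def NN)
    also have "\<dots> = (if i div 2^n = Z then 1 else 0) * (if i mod 2^n = 0 then 1 else 0)"
      using i Z by (simp add: psi0_def NN less_mult_imp_div_less)
    also have "\<dots> = (if i = Z * 2^n then 1 else 0)"
      by (auto simp: mult.commute)
    finally show ?thesis .
  qed
  have Wi: "W $$ (Z,0) = cnj (?U $$ (b, Z * 2^n))" if Z: "Z < 2^n" for Z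
  proof -
    have ZN: "Z * 2^n < ?N" using Z NN by simp
    have "W $$ (Z,0) = (\<Sum>k<?N. adj K $$ (Z,k) * V $$ (k,0))"
      unfolding W_def using Kd Vd Z by (subst mat_mult_entry) auto
    also have "\<dots> = adj K $$ (Z,Z * 2^n) * V $$ (Z * 2^n,0)"
      by (rule sum_single[OF ZN]) (use Kd Ki Z in auto)
    also have "\<dots> = cnj (?U $$ (b, Z * 2^n))" using Kd Ki[OF ZN Z] Z ZN Vi[OF ZN] by simp
    finally show ?thesis .
  qed
  show "povm_elem n n (psi0 n) gs (Phi n) b $$ (X,Y) = cnj (?U $$ (b, X*2^n)) * ?U $$ (b, Y*2^n)"
  proof -
    have "(W * adj W) $$ (X,Y) = (\<Sum>k<1. W $$ (X,k) * adj W $$ (k,Y))"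
      using Wd X Y by (subst mat_mult_entry) auto
    also have "\<dots> = W $$ (X,0) * cnj (W $$ (Y,0))" using Wd X Y by simp
    finally show ?thesis unfolding pe using Wi[OF X] Wi[OF Y] by simp
  qed
  show "povm_elem n n (psi0 n) gs (Phi n) b \<in> carrier_mat (2^n) (2^n)"
    unfolding pe using Wd by auto
qed


definition circ :: "nat \<Rightarrow> nat \<Rightarrow> gate list" where "circ n r = fullc n (gad r) n"
definition mu :: "nat \<Rightarrow> nat \<Rightarrow> nat \<Rightarrow> complex mat" where
  "mu n r b = povm_elem n n (psi0 n) (circ n r) (Phi n) b"

lemma circ_PP: "circuit_mat (n+n) (circ n r) = PP n (\<lambda>i. if i < n then circuit_mat 2 (gad r i) else 1\<^sub>m 4)"
  unfolding circ_def by (rule circuit_PP) (use gad_ok in blast)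

lemma U_col: assumes b: "b < 2^(n+n)" and X: "X < 2^n"
  shows "circuit_mat (n+n) (circ n r) $$ (b, X * 2^n) = (\<Prod>j<n. Vg (pr n j b) (bt X j))"
proof -
  have XN: "X * 2^n < 2^(n+n)" using X by (simp add: power_add)
  have "circuit_mat (n+n) (circ n r) $$ (b, X * 2^n) =
      (\<Prod>j<n. (if j < n then circuit_mat 2 (gad r j) else 1\<^sub>m 4) $$ (pr n j b, pr n j (X * 2^n)))"
    unfolding circ_PP by (rule PP_index[OF b XN])
  also have "\<dots> = (\<Prod>j<n. Vg (pr n j b) (bt X j))"
  proof (rule prod.cong[OF refl])
    fix j assume "j \<in> {..<n}" hence j: "j < n" by simp
    have "pr n j (X * 2^n) = 2 * bt X j"
      using bt_split[of 0 n j X] j by (simp add: pr_def bt_def)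
    then show "(if j < n then circuit_mat 2 (gad r j) else 1\<^sub>m 4) $$ (pr n j b, pr n j (X * 2^n)) = Vg (pr n j b) (bt X j)"
      using j gad_col[OF pr_lt bt_lt2] by simp
  qed
  finally show ?thesis .
qed

lemma mu_carrier: "b < 2^(n+n) \<Longrightarrow> mu n r b \<in> carrier_mat (2^n) (2^n)"
  unfolding mu_def by (rule povm_entry(2)[where X=0 and Y=0]) (auto simp: circ_PP)

lemma mu_entry: assumes b: "b < 2^(n+n)" and X: "X < 2^n" and Y: "Y < 2^n"
  shows "mu n r b $$ (X,Y) = (\<Prod>j<n. nuB P0 Q0 Z0 W0 (pr n j b) (bt X j) (bt Y j))"
proof -
  have "mu n r b $$ (X,Y) = cnj (\<Prod>j<n. Vg (pr n j b) (bt X j)) * (\<Prod>j<n. Vg (pr n j b) (bt Y j))"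
    unfolding mu_def using povm_entry(1)[OF _ b X Y, of "circ n r"] U_col[OF b X] U_col[OF b Y]
    by (simp add: circ_PP)
  also have "\<dots> = (\<Prod>j<n. cnj (Vg (pr n j b) (bt X j)) * Vg (pr n j b) (bt Y j))"
    by (simp add: cnj_prod prod.distrib)
  also have "\<dots> = (\<Prod>j<n. nuB P0 Q0 Z0 W0 (pr n j b) (bt X j) (bt Y j))"
    by (rule prod.cong[OF refl]) (simp add: nu_V)
  finally show ?thesis .
qed

definition coef :: "nat \<Rightarrow> nat \<Rightarrow> nat \<Rightarrow> nat \<Rightarrow> complex" where
  "coef n I J b = (\<Prod>j<n. gaB P0 Q0 Z0 W0 (bt I j) (bt J j) (pr n j b))"

lemma bits_eq_iff: "x < 2^K \<Longrightarrow> y < 2^K \<Longrightarrow> (\<forall>q<K. bt x q = bt y q) \<longleftrightarrow> (x::nat) = y"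
  using bits_eq by auto

lemma coef_sum: assumes I: "I < 2^n" and J: "J < 2^n" and X: "X < 2^n" and Y: "Y < 2^n"
  shows "(\<Sum>b<2^(n+n). coef n I J b * mu n r b $$ (X,Y)) = (if X = I \<and> Y = J then 1 else 0)"
proof -
  have "(\<Sum>b<2^(n+n). coef n I J b * mu n r b $$ (X,Y)) =
     (\<Sum>b<2^(n+n). \<Prod>j<n. gaB P0 Q0 Z0 W0 (bt I j) (bt J j) (pr n j b) * nuB P0 Q0 Z0 W0 (pr n j b) (bt X j) (bt Y j))"
    by (rule sum.cong[OF refl]) (simp add: coef_def mu_entry X Y prod.distrib)
  also have "\<dots> = (\<Prod>j<n. \<Sum>c<4. gaB P0 Q0 Z0 W0 (bt I j) (bt J j) c * nuB P0 Q0 Z0 W0 c (bt X j) (bt Y j))"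
    by (rule sum_factor)
  also have "\<dots> = (\<Prod>j<n. if bt X j = bt I j \<and> bt Y j = bt J j then 1 else 0)"
    by (rule prod.cong[OF refl]) (rule ic_abstract[OF PQ_nz ZW_nz bt_lt2 bt_lt2 bt_lt2 bt_lt2])
  also have "\<dots> = (if \<forall>j<n. bt X j = bt I j \<and> bt Y j = bt J j then 1 else 0)"
    by (rule prod_indicator)
  also have "(\<forall>j<n. bt X j = bt I j \<and> bt Y j = bt J j) \<longleftrightarrow> X = I \<and> Y = J"
    using bits_eq_iff[OF X I] bits_eq_iff[OF Y J] by blast
  finally show ?thesis .
qed


context matrix_vs
begin

lemma finsum_mat_index:
  assumes i: "i < nr" and j: "j < nc" and f: "f \<in> A \<rightarrow> carrier_mat nr nc"
  shows "finsum V f A $$ (i,j) = (\<Sum>x\<in>A. f x $$ (i,j))"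
  using f
proof (induct A rule: infinite_finite_induct)
  case (infinite A) then show ?case using i j by (simp add: finsum_def finprod_def module_mat_simps)
next
  case empty then show ?case using i j by simp
next
  case (insert x X)
  have f': "f \<in> X \<rightarrow> carrier_mat nr nc" "f x \<in> carrier_mat nr nc" using insert.prems by auto
  have "finsum V f (insert x X) = f x + finsum V f X"
    using finsum_insert[OF insert.hyps(1) insert.hyps(2) f'(1) f'(2)] by simp
  moreover have "finsum V f X \<in> carrier_mat nr nc" using finsum_closed[OF f'(1)] by simp
  ultimately have d: "dim_row (finsum V f X) = nr" "dim_col (finsum V f X) = nc" by auto
  have "(f x + finsum V f X) $$ (i,j) = f x $$ (i,j) + finsum V f X $$ (i,j)"
    using d i j by simp
  then show ?case using insert f' by simp
qed

lemma lincomb_mat_index: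
  assumes i: "i < nr" and j: "j < nc" and A: "A \<subseteq> carrier_mat nr nc"
  shows "lincomb a A $$ (i,j) = (\<Sum>v\<in>A. a v * v $$ (i,j))"
proof -
  have "lincomb a A $$ (i,j) = (\<Sum>v\<in>A. (a v \<cdot>\<^sub>m v) $$ (i,j))"
    unfolding lincomb_def using A i j by (subst finsum_mat_index) auto
  also have "\<dots> = (\<Sum>v\<in>A. a v * v $$ (i,j))"
    by (rule sum.cong[OF refl]) (use A i j in \<open>auto simp: carrier_matD\<close>)
  finally show ?thesis .
qed

end

definition Emat :: "nat \<Rightarrow> nat \<Rightarrow> nat \<Rightarrow> complex mat" where
  "Emat d x y = mat d d (\<lambda>(i,j). if i = x \<and> j = y then 1 else 0)"

lemma span_full_dim:
  fixes M :: "complex mat set"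
  assumes M: "M \<subseteq> carrier_mat d d" "finite M" "card M \<le> d * d"
    and full: "carrier_mat d d \<subseteq> LinearCombinations.module.span class_ring (module_mat TYPE(complex) d d) M"
  shows "mat_span_dim d M = d * d"
proof -
  interpret V: matrix_vs d d "TYPE(complex)" .
  have sp: "V.span M = carrier_mat d d" using V.span_is_subset2[OF M(1)] full by auto
  have eq: "V.span_vs M = V.V" unfolding sp by (simp add: module_mat_def)
  have md: "mat_span_dim d M = V.dim" unfolding mat_span_dim_def eq ..
  have le: "V.dim \<le> d * d" using V.gen_ge_dim[OF M(2) M(1) sp] M(3) by simp
  have fd: "V.fin_dim" unfolding V.fin_dim_def using M sp by auto
  define E where "E = (\<lambda>(x,y). Emat d x y) ` ({..<d} \<times> {..<d})"
  have Ec: "E \<subseteq> carrier_mat d d" by (auto simp: E_def Emat_def)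
  have inj: "inj_on (\<lambda>(x,y). Emat d x y) ({..<d} \<times> {..<d})"
  proof (rule inj_onI, clarify)
    fix x y x' y' assume xy: "x < d" "y < d" "x' < d" "y' < d" and e: "Emat d x y = Emat d x' y'"
    have "Emat d x y $$ (x,y) = Emat d x' y' $$ (x,y)" using e by simp
    then show "x = x' \<and> y = y'" using xy by (simp add: Emat_def split: if_splits)
  qed
  have cardE: "card E = d * d" unfolding E_def using card_image[OF inj] by simp
  have li: "V.lin_indpt E"
  proof
    assume "V.lin_dep E"
    then obtain A a v where A: "finite A" "A \<subseteq> E" "V.lincomb a A = 0\<^sub>m d d" "v \<in> A" "a v \<noteq> 0"
      unfolding V.lin_dep_def by auto
    obtain x y where xy: "x < d" "y < d" "v = Emat d x y" using A(2,4) by (auto simp: E_def)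
    have "V.lincomb a A $$ (x,y) = (\<Sum>w\<in>A. a w * w $$ (x,y))"
      using V.lincomb_mat_index[OF xy(1,2)] A(2) Ec by auto
    also have "\<dots> = a v * v $$ (x,y)"
    proof (rule sum.remove[THEN trans])
      show "finite A" "v \<in> A" using A by auto
      have "w $$ (x,y) = 0" if w: "w \<in> A - {v}" for w
      proof -
        obtain x' y' where "x' < d" "y' < d" "w = Emat d x' y'" using w A(2) by (auto simp: E_def)
        moreover have "w \<noteq> v" using w by auto
        ultimately show ?thesis using xy by (auto simp: Emat_def)
      qed
      then show "a v * v $$ (x, y) + (\<Sum>w\<in>A - {v}. a w * w $$ (x, y)) = a v * v $$ (x, y)" by simp
    qed
    also have "\<dots> = a v" using xy by (simp add: Emat_def)
    finally have "a v = 0" using A(3) xy by simp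
    then show False using A(5) by simp
  qed
  have ge: "d * d \<le> V.dim" using V.li_le_dim(2)[OF fd Ec li] cardE by simp
  show ?thesis using md le ge by simp
qed


lemma mu_span:
  assumes B: "B \<in> carrier_mat (2^n) (2^n)"
  shows "B \<in> LinearCombinations.module.span class_ring (module_mat TYPE(complex) (2^n) (2^n)) (mu n r ` {..<2^(n+n)})"
proof -
  interpret V: matrix_vs "2^n" "2^n" "TYPE(complex)" .
  let ?K = "2^(n+n) :: nat"
  let ?M = "mu n r ` {..<?K}"
  define cB where "cB b = (\<Sum>I<2^n. \<Sum>J<2^n. B $$ (I,J) * coef n I J b)" for b
  define a where "a w = (\<Sum>b\<in>{b\<in>{..<?K}. mu n r b = w}. cB b)" for w
  have Mc: "?M \<subseteq> carrier_mat (2^n) (2^n)" using mu_carrier by auto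
  have "V.lincomb a ?M = B"
  proof (rule eq_matI)
    show "dim_row (V.lincomb a ?M) = dim_row B" "dim_col (V.lincomb a ?M) = dim_col B"
      using V.lincomb_closed[OF Mc] B by auto
    fix X Y assume "X < dim_row B" "Y < dim_col B"
    hence X: "X < 2^n" and Y: "Y < 2^n" using B by auto
    have "V.lincomb a ?M $$ (X,Y) = (\<Sum>w\<in>?M. a w * w $$ (X,Y))"
      by (rule V.lincomb_mat_index[OF X Y Mc])
    also have "\<dots> = (\<Sum>w\<in>?M. \<Sum>b\<in>{b\<in>{..<?K}. mu n r b = w}. cB b * mu n r b $$ (X,Y))"
      unfolding a_def sum_distrib_right by (intro sum.cong refl) auto
    also have "\<dots> = (\<Sum>b<?K. cB b * mu n r b $$ (X,Y))"
      by (rule sum.image_gen[symmetric]) simp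
    also have "\<dots> = (\<Sum>I<2^n. \<Sum>J<2^n. B $$ (I,J) * (\<Sum>b<?K. coef n I J b * mu n r b $$ (X,Y)))"
      unfolding cB_def sum_distrib_right sum_distrib_left
      by (subst sum.swap) (subst (2) sum.swap, simp add: mult.assoc)
    also have "\<dots> = (\<Sum>I<2^n. \<Sum>J<2^n. B $$ (I,J) * (if X = I \<and> Y = J then 1 else 0))"
      by (intro sum.cong refl) (simp add: coef_sum X Y)
    also have "\<dots> = (\<Sum>J<2^n. B $$ (X,J) * (if X = X \<and> Y = J then 1 else 0))"
      by (rule sum_single[OF X]) (rule sum.neutral, auto)
    also have "\<dots> = B $$ (X,Y) * (if X = X \<and> Y = Y then 1 else 0)"
      by (rule sum_single[OF Y]) auto
    also have "\<dots> = B $$ (X,Y)" by simp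
    finally show "V.lincomb a ?M $$ (X,Y) = B $$ (X,Y)" .
  qed
  then show ?thesis unfolding V.span_def by force
qed

lemma mu_IC: "mat_span_dim (2^n) (mu n r ` {..<2^(n+n)}) = 4^n"
proof -
  have "mat_span_dim (2^n) (mu n r ` {..<2^(n+n)}) = 2^n * 2^n"
  proof (rule span_full_dim)
    show "mu n r ` {..<2^(n+n)} \<subseteq> carrier_mat (2^n) (2^n)" using mu_carrier by auto
    show "finite (mu n r ` {..<2^(n+n)})" by simp
    show "card (mu n r ` {..<2^(n+n)}) \<le> 2^n * 2^n"
      using card_image_le[of "{..<2^(n+n)}" "mu n r"] by (simp add: power_add)
    show "carrier_mat (2^n) (2^n) \<subseteq> LinearCombinations.module.span class_ring (module_mat TYPE(complex) (2^n) (2^n)) (mu n r ` {..<2^(n+n)})"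
      using mu_span by blast
  qed
  also have "(2::nat)^n * 2^n = 4^n" by (simp add: power_mult_distrib[symmetric])
  finally show ?thesis .
qed


definition dg :: "nat \<Rightarrow> (nat \<Rightarrow> complex) \<Rightarrow> complex mat" where
  "dg D f = mat D D (\<lambda>(i,j). if i = j then f i else 0)"

definition zl :: "bool list \<Rightarrow> complex mat" where
  "zl bs = foldr kron (map (\<lambda>b. if b then pauli_Z else 1\<^sub>m 2) bs) (1\<^sub>m 1)"

fun zsign :: "bool list \<Rightarrow> nat \<Rightarrow> complex" where
  "zsign [] x = 1"
| "zsign (b # bs) x = (if b \<and> x div 2^length bs = 1 then -1 else 1) * zsign bs (x mod 2^length bs)"

lemma dg_dims[simp]: "dim_row (dg D f) = D" "dim_col (dg D f) = D" by (simp_all add: dg_def)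
lemma dg_carrier[simp]: "dg D f \<in> carrier_mat D D" by (simp add: dg_def)
lemma dg_index[simp]: "i < D \<Longrightarrow> j < D \<Longrightarrow> dg D f $$ (i,j) = (if i = j then f i else 0)"
  by (simp add: dg_def)

lemma one_dg: "1\<^sub>m D = dg D (\<lambda>_. 1)"
  by (rule eq_matI) auto

lemma Z_dg: "pauli_Z = dg 2 (\<lambda>i. if i = 1 then -1 else 1)"
proof (rule eq_matI)
  fix i j assume "i < dim_row (dg 2 (\<lambda>i. if i = 1 then -1 else (1::complex)))" "j < dim_col (dg 2 (\<lambda>i. if i = 1 then -1 else (1::complex)))"
  then have "i \<in> {0,1}" "j \<in> {0,1}" by auto
  then show "pauli_Z $$ (i, j) = dg 2 (\<lambda>i. if i = 1 then - 1 else 1) $$ (i, j)"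
    by (auto simp: pauli_Z_def mat_of_rows_list_def)
qed (auto simp: pauli_Z_def mat_of_rows_list_def)

lemma kron_dg: assumes "0 < D"
  shows "kron (dg 2 p) (dg D q) = dg (2 * D) (\<lambda>x. p (x div D) * q (x mod D))"
proof (rule eq_matI)
  fix x y assume "x < dim_row (dg (2 * D) (\<lambda>x. p (x div D) * q (x mod D)))" "y < dim_col (dg (2 * D) (\<lambda>x. p (x div D) * q (x mod D)))"
  hence x: "x < 2 * D" and y: "y < 2 * D" by auto
  have xd: "x div D < 2" "y div D < 2" using x y assms by (auto simp: less_mult_imp_div_less mult.commute)
  have md: "x mod D < D" "y mod D < D" using assms by auto
  have eq: "(x div D = y div D \<and> x mod D = y mod D) \<longleftrightarrow> x = y"
    by (metis div_mult_mod_eq)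
  show "kron (dg 2 p) (dg D q) $$ (x, y) = dg (2 * D) (\<lambda>x. p (x div D) * q (x mod D)) $$ (x, y)"
    using x y xd md eq by (auto simp: kron_index)
qed (auto)

lemma zl_dg: "zl bs = dg (2^length bs) (zsign bs)"
proof (induction bs)
  case Nil then show ?case by (simp add: zl_def one_dg)
next
  case (Cons b bs)
  have "zl (b # bs) = kron (if b then pauli_Z else 1\<^sub>m 2) (zl bs)" by (simp add: zl_def)
  also have "(if b then pauli_Z else 1\<^sub>m 2) = dg 2 (\<lambda>i. if b \<and> i = 1 then -1 else 1)"
    using Z_dg one_dg by auto
  also have "kron \<dots> (zl bs) = dg (2 * 2^length bs) (\<lambda>x. (if b \<and> x div 2^length bs = 1 then -1 else 1) * zsign bs (x mod 2^length bs))"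
    unfolding Cons by (rule kron_dg) simp
  finally show ?case by simp
qed

lemma dg_mult: "dg D f * dg D g = dg D (\<lambda>i. f i * g i)"
proof (rule eq_matI)
  fix i j assume "i < dim_row (dg D (\<lambda>i. f i * g i))" "j < dim_col (dg D (\<lambda>i. f i * g i))"
  hence i: "i < D" and j: "j < D" by auto
  have "(dg D f * dg D g) $$ (i,j) = (\<Sum>k<D. dg D f $$ (i,k) * dg D g $$ (k,j))"
    using i j by (subst mat_mult_entry) auto
  also have "\<dots> = dg D f $$ (i,i) * dg D g $$ (i,j)"
    by (rule sum_single[OF i]) (use i j in auto)
  finally show "(dg D f * dg D g) $$ (i,j) = dg D (\<lambda>i. f i * g i) $$ (i,j)" using i j by simp
qed auto

lemma zsign_xor: "length bs = length cs \<Longrightarrow> zsign (map2 (\<noteq>) bs cs) x = zsign bs x * zsign cs x"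
proof (induction bs arbitrary: cs x)
  case Nil then show ?case by simp
next
  case (Cons b bs)
  then obtain c cs' where cs: "cs = c # cs'" "length bs = length cs'" by (cases cs) auto
  show ?case using Cons.IH[OF cs(2)] cs by auto
qed

lemma zsign_false: "zsign (replicate N False) = (\<lambda>_. 1)"
proof
  fix x show "zsign (replicate N False) x = 1" by (induction N arbitrary: x) auto
qed

lemma zsign_0: "zsign bs 0 = 1"
  by (induction bs) auto

lemma zsign_pm: "zsign bs x = 1 \<or> zsign bs x = -1"
proof (induction bs arbitrary: x)
  case (Cons b bs)
  have "zsign bs (x mod 2^length bs) = 1 \<or> zsign bs (x mod 2^length bs) = -1" by (rule Cons.IH)
  then show ?case by auto
qed simp

lemma zl_mult: assumes "length bs = length cs" shows "zl bs * zl cs = zl (map2 (\<noteq>) bs cs)"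
proof -
  have z: "zsign (map2 (\<noteq>) bs cs) = (\<lambda>i. zsign bs i * zsign cs i)"
    using zsign_xor[OF assms] by (intro ext) simp
  have l: "length (map2 (\<noteq>) bs cs) = length bs" using assms by simp
  show ?thesis unfolding zl_dg z l using assms by (simp add: dg_mult)
qed

lemma zl_one: "zl (replicate N False) = 1\<^sub>m (2^N)"
  by (simp add: zl_dg zsign_false one_dg)

lemma zsign_inj: "length bs = length cs \<Longrightarrow> (\<forall>x<2^length bs. zsign bs x = zsign cs x) \<Longrightarrow> bs = cs"
proof (induction bs arbitrary: cs)
  case Nil then show ?case by simp
next
  case (Cons b bs)
  then obtain c cs' where cs: "cs = c # cs'" "length bs = length cs'" by (cases cs) auto
  let ?D = "2^length bs :: nat"
  have e: "zsign (b # bs) x = zsign (c # cs') x" if "x < 2 * ?D" for x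
    using Cons.prems(2) that cs by simp
  have "zsign (b # bs) ?D = zsign (c # cs') ?D" by (rule e) simp
  then have "(if b then -1 else 1) = (if c then -1 else (1::complex))" using cs(2)[symmetric] by (simp add: zsign_0)
  then have bc: "b = c" by (auto split: if_splits)
  have "\<forall>x<?D. zsign bs x = zsign cs' x"
  proof (intro allI impI)
    fix x assume x: "x < ?D"
    have "zsign (b # bs) x = zsign (c # cs') x" by (rule e) (use x in simp)
    then show "zsign bs x = zsign cs' x" using x cs(2)[symmetric] bc by simp
  qed
  then show ?case using Cons.IH[OF cs(2)] cs bc by simp
qed

lemma zl_inj: "inj_on zl {bs. length bs = N}"
proof (rule inj_onI)
  fix bs cs assume bs: "bs \<in> {bs. length bs = N}" and cs: "cs \<in> {bs. length bs = N}" and e: "zl bs = zl cs"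
  have "\<forall>x<2^length bs. zsign bs x = zsign cs x"
  proof (intro allI impI)
    fix x :: nat assume x: "x < 2^length bs"
    have "zl bs $$ (x,x) = zl cs $$ (x,x)" using e by simp
    then show "zsign bs x = zsign cs x" using x bs cs by (simp add: zl_dg)
  qed
  then show "bs = cs" using zsign_inj bs cs by auto
qed

definition ZG :: "nat \<Rightarrow> complex mat set" where "ZG N = zl ` {bs. length bs = N}"

lemma smult_one_mat': "(1::complex) \<cdot>\<^sub>m A = A" by (rule eq_matI) auto

lemma ZG_stab: "stabilizer_group N (ZG N)"
  unfolding stabilizer_group_def
proof (intro conjI ballI)
  show "ZG N \<subseteq> pauli_group N"
  proof
    fix M assume "M \<in> ZG N"
    then obtain bs where bs: "length bs = N" "M = zl bs" by (auto simp: ZG_def)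
    let ?Ps = "map (\<lambda>b. if b then pauli_Z else 1\<^sub>m 2) bs"
    have "M = (\<i> ^ 0) \<cdot>\<^sub>m foldr kron ?Ps (1\<^sub>m 1)" using bs by (simp add: zl_def smult_one_mat')
    moreover have "length ?Ps = N \<and> set ?Ps \<subseteq> {1\<^sub>m 2, pauli_X, pauli_Y, pauli_Z}" using bs by auto
    ultimately show "M \<in> pauli_group N" unfolding pauli_group_def by blast
  qed
  show "1\<^sub>m (2^N) \<in> ZG N" unfolding ZG_def using zl_one[of N] by (metis (mono_tags) image_eqI length_replicate mem_Collect_eq)
  fix a b assume a: "a \<in> ZG N" and b: "b \<in> ZG N"
  obtain as where as: "length as = N" "a = zl as" using a by (auto simp: ZG_def)
  obtain bs where bs: "length bs = N" "b = zl bs" using b by (auto simp: ZG_def)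
  show "a * b \<in> ZG N" unfolding ZG_def as bs zl_mult[OF as(1)[folded bs(1)]] using as bs by auto
  show "a * b = b * a" unfolding as bs using zl_mult[of as bs] zl_mult[of bs as] as bs
    by (simp add: zl_dg dg_mult mult.commute)
next
  fix a assume a: "a \<in> ZG N"
  obtain as where as: "length as = N" "a = zl as" using a by (auto simp: ZG_def)
  have "map2 (\<noteq>) as as = replicate N False" using as(1)
    by (induction as arbitrary: N) auto
  then have "a * a = 1\<^sub>m (2^N)" unfolding as(2) using zl_mult[of as as] zl_one[of N] by simp
  then show "\<exists>b\<in>ZG N. a * b = 1\<^sub>m (2^N)" using a by blast
next
  show "(-1) \<cdot>\<^sub>m 1\<^sub>m (2^N) \<notin> ZG N"
  proof
    assume "(-1) \<cdot>\<^sub>m 1\<^sub>m (2^N) \<in> ZG N"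
    then obtain bs where bs: "length bs = N" "(-1) \<cdot>\<^sub>m 1\<^sub>m (2^N) = zl bs" by (auto simp: ZG_def)
    have "((-1) \<cdot>\<^sub>m 1\<^sub>m (2^N) :: complex mat) $$ (0,0) = zl bs $$ (0,0)" using bs by simp
    moreover have "zl bs $$ (0,0) = 1" using bs by (simp add: zl_dg zsign_0)
    moreover have "((-1) \<cdot>\<^sub>m 1\<^sub>m (2^N) :: complex mat) $$ (0,0) = -1" by simp
    ultimately show False by simp
  qed
  show "card (ZG N) = 2^N"
  proof -
    have "card (ZG N) = card {bs :: bool list. length bs = N}" unfolding ZG_def by (rule card_image[OF zl_inj])
    also have "{bs :: bool list. length bs = N} = {bs. set bs \<subseteq> UNIV \<and> length bs = N}" by simp
    also have "card \<dots> = card (UNIV :: bool set)^N" by (rule card_lists_length_eq) simp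
    also have "\<dots> = 2^N" by simp
    finally show ?thesis .
  qed
qed


lemma cinner_unit: assumes "b < D" "b' < D"
  shows "cinner (unit_vec D b) (unit_vec D b') = (if b = b' then 1 else 0)"
proof -
  have "cinner (unit_vec D b) (unit_vec D b') = (\<Sum>i<D. cnj (unit_vec D b $ i) * unit_vec D b' $ i)"
    by (simp add: cinner_def)
  also have "\<dots> = cnj (unit_vec D b $ b) * unit_vec D b' $ b"
    by (rule sum_single[OF assms(1)]) (use assms in auto)
  also have "\<dots> = (if b = b' then 1 else 0)" using assms by simp
  finally show ?thesis .
qed

lemma is_state_unit: "b < 2^N \<Longrightarrow> is_state N (unit_vec (2^N) b)"
  unfolding is_state_def using cinner_unit[of b "2^N" b] by simp

lemma zl_mult_vec: assumes v: "v \<in> carrier_vec (2^length bs)" and i: "i < 2^length bs"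
  shows "(zl bs *\<^sub>v v) $ i = zsign bs i * v $ i"
proof -
  have "(zl bs *\<^sub>v v) $ i = (\<Sum>k<2^length bs. dg (2^length bs) (zsign bs) $$ (i,k) * v $ k)"
    using v i by (simp add: zl_dg scalar_prod_def atLeast0LessThan)
  also have "\<dots> = dg (2^length bs) (zsign bs) $$ (i,i) * v $ i"
    by (rule sum_single[OF i]) (use i in auto)
  finally show ?thesis using i by simp
qed

lemma zl_carrier: "zl bs \<in> carrier_mat (2^length bs) (2^length bs)"
  by (simp add: zl_dg)

lemma exists_neg: "i < 2^N \<Longrightarrow> i \<noteq> 0 \<Longrightarrow> \<exists>bs. length bs = N \<and> zsign bs i = -1"
proof (induction N arbitrary: i)
  case 0 then show ?case by simp
next
  case (Suc N)
  let ?D = "2^N :: nat"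
  show ?case
  proof (cases "i div ?D = 1")
    case True
    have "zsign (True # replicate N False) i = -1" using True by (simp add: zsign_false)
    then show ?thesis by (metis length_Cons length_replicate)
  next
    case False
    have "i div ?D < 2" using Suc.prems(1) by (simp add: less_mult_imp_div_less mult.commute)
    then have "i div ?D = 0" using False by simp
    then have iD: "i < ?D" by (simp add: div_eq_0_iff)
    obtain bs where bs: "length bs = N" "zsign bs i = -1" using Suc.IH[OF iD Suc.prems(2)] by blast
    have "zsign (False # bs) i = -1" using bs iD by simp
    then show ?thesis using bs by (metis length_Cons)
  qed
qed

lemma stab_state: "stabilizer_state N (unit_vec (2^N) 0)"
  unfolding stabilizer_state_def
proof (intro conjI exI[of _ "ZG N"] ballI)
  show "is_state N (unit_vec (2^N) 0)" by (rule is_state_unit) simp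
  show "stabilizer_group N (ZG N)" by (rule ZG_stab)
  fix v :: "complex vec" assume v: "v \<in> carrier_vec (2^N)"
  show "(\<forall>g\<in>ZG N. g *\<^sub>v v = v) = (\<exists>c. v = c \<cdot>\<^sub>v unit_vec (2^N) 0)"
  proof
    assume h: "\<forall>g\<in>ZG N. g *\<^sub>v v = v"
    have "v = v $ 0 \<cdot>\<^sub>v unit_vec (2^N) 0"
    proof (rule eq_vecI)
      show "dim_vec v = dim_vec (v $ 0 \<cdot>\<^sub>v unit_vec (2^N) 0)" using v by simp
      fix i assume "i < dim_vec (v $ 0 \<cdot>\<^sub>v unit_vec (2^N) 0)"
      hence i: "i < 2^N" by simp
      show "v $ i = (v $ 0 \<cdot>\<^sub>v unit_vec (2^N) 0) $ i"
      proof (cases "i = 0")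
        case True then show ?thesis using i by simp
      next
        case False
        obtain bs where bs: "length bs = N" "zsign bs i = -1" using exists_neg[OF i False] by blast
        have "zl bs \<in> ZG N" using bs by (auto simp: ZG_def)
        then have "(zl bs *\<^sub>v v) $ i = v $ i" using h by simp
        moreover have "(zl bs *\<^sub>v v) $ i = - v $ i" using zl_mult_vec[of v bs i] v i bs by simp
        ultimately have "v $ i = 0" by simp
        then show ?thesis using i False by simp
      qed
    qed
    then show "\<exists>c. v = c \<cdot>\<^sub>v unit_vec (2^N) 0" by blast
  next
    assume "\<exists>c. v = c \<cdot>\<^sub>v unit_vec (2^N) 0"
    then obtain c where c: "v = c \<cdot>\<^sub>v unit_vec (2^N) 0" by blast
    show "\<forall>g\<in>ZG N. g *\<^sub>v v = v"
    proof
      fix g assume "g \<in> ZG N"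
      then obtain bs where bs: "length bs = N" "g = zl bs" by (auto simp: ZG_def)
      show "g *\<^sub>v v = v"
      proof (rule eq_vecI)
        show "dim_vec (g *\<^sub>v v) = dim_vec v" using bs v zl_carrier[of bs] by simp
        fix i assume "i < dim_vec v"
        hence i: "i < 2^N" using v by simp
        show "(g *\<^sub>v v) $ i = v $ i"
          using zl_mult_vec[of v bs i] v i bs c by (auto simp: zsign_0)
      qed
    qed
  qed
qed

lemma stab_basis: "stabilizer_basis N (\<lambda>b. unit_vec (2^N) b)"
  unfolding stabilizer_basis_def
proof (intro conjI exI[of _ "ZG N"] allI impI ballI)
  show "stabilizer_group N (ZG N)" by (rule ZG_stab)
  fix b :: nat assume b: "b < 2^N"
  show "is_state N (unit_vec (2^N) b)" by (rule is_state_unit[OF b])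
  fix g assume "g \<in> ZG N"
  then obtain bs where bs: "length bs = N" "g = zl bs" by (auto simp: ZG_def)
  have "g *\<^sub>v unit_vec (2^N) b = zsign bs b \<cdot>\<^sub>v unit_vec (2^N) b"
  proof (rule eq_vecI)
    show "dim_vec (g *\<^sub>v unit_vec (2^N) b) = dim_vec (zsign bs b \<cdot>\<^sub>v unit_vec (2^N) b)"
      using bs zl_carrier[of bs] by simp
    fix i assume "i < dim_vec (zsign bs b \<cdot>\<^sub>v unit_vec (2^N) b)"
    hence i: "i < 2^N" by simp
    show "(g *\<^sub>v unit_vec (2^N) b) $ i = (zsign bs b \<cdot>\<^sub>v unit_vec (2^N) b) $ i"
      using zl_mult_vec[of "unit_vec (2^N) b" bs i] i bs b by auto
  qed
  then show "\<exists>c. g *\<^sub>v unit_vec (2^N) b = c \<cdot>\<^sub>v unit_vec (2^N) b" by blast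
next
  fix b b' :: nat assume "b < 2^N" "b' < 2^N" "b \<noteq> b'"
  then show "cinner (unit_vec (2^N) b) (unit_vec (2^N) b') = 0" using cinner_unit by simp
qed


lemma mapg_ok: assumes g: "gate_ok 2 g" and j: "j < n" shows "gate_ok (n+n) (mapg n j g)"
proof (cases g)
  case (CNOTg c d)
  then have "c < 2" "d < 2" "c \<noteq> d" using g by auto
  then show ?thesis using CNOTg j mq_pos[OF j] by (auto simp: mq_def)
qed (use g j mq_pos[OF j] in auto)

lemma is_T_mapg: "is_T (mapg n j g) = is_T g"
  by (cases g) auto

lemma tcount_append: "t_count (xs @ ys) = t_count xs + t_count ys"
  by (simp add: t_count_def)

lemma tcount_map: "t_count (map (mapg n j) gs) = t_count gs"
  by (induction gs) (auto simp: t_count_def is_T_mapg)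

lemma tcount_fullc: "t_count (fullc n gd k) = (\<Sum>j<k. t_count (gd j))"
proof (induction k)
  case 0 then show ?case by (simp add: fullc_def t_count_def)
next
  case (Suc k)
  have "fullc n gd (Suc k) = fullc n gd k @ map (mapg n k) (gd k)" by (simp add: fullc_def)
  then show ?case using Suc by (simp add: tcount_append tcount_map)
qed

lemma circ_ok: "\<forall>g\<in>set (circ n r). gate_ok (n+n) g"
  unfolding circ_def fullc_def using gad_ok mapg_ok by fastforce

lemma circ_tcount: assumes "n \<ge> 1" shows "t_count (circ n r) = r + 2 * n"
proof -
  have "t_count (circ n r) = (\<Sum>j<n. (if j = 0 then r else 0) + 2)"
    unfolding circ_def tcount_fullc tcount_gad ..
  also have "\<dots> = (\<Sum>j<n. if j = 0 then r else 0) + (\<Sum>j<n. 2)" by (rule sum.distrib)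
  also have "(\<Sum>j<n. (2::nat)) = 2 * n" by simp
  also have "(\<Sum>j<n. if j = 0 then r else 0) = r" using assms by (simp add: sum.delta)
  finally show ?thesis .
qed

theorem theorem5:
  fixes n t :: nat
  assumes "n \<ge> 1" and "t \<ge> 2 * n"
  shows "\<exists>\<mu> K. t_doped_povm n t \<mu> K \<and> informationally_complete n \<mu> K"
proof (intro exI conjI)
  let ?r = "t - 2 * n"
  show "t_doped_povm n t (mu n ?r) (2^(n+n))"
    unfolding t_doped_povm_def
  proof (intro exI conjI)
    show "2^(n+n) = (2::nat)^(n+n)" ..
    show "stabilizer_state n (psi0 n)" unfolding psi0_def by (rule stab_state)
    show "\<forall>g\<in>set (circ n ?r). gate_ok (n+n) g" by (rule circ_ok)
    show "t_count (circ n ?r) = t" using circ_tcount[OF assms(1)] assms(2) by simp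
    show "stabilizer_basis (n+n) (Phi n)" unfolding Phi_def by (rule stab_basis)
    show "\<forall>b<2^(n+n). mu n ?r b = povm_elem n n (psi0 n) (circ n ?r) (Phi n) b"
      by (simp add: mu_def)
  qed
  show "informationally_complete n (mu n ?r) (2^(n+n))"
    unfolding informationally_complete_def by (rule mu_IC)
qed


end
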